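(* Let $\mathcal L$ be a BQD and let $I\subset T(V\oplus W)$ be the ideal defining its shape algebra, with its $\mathbb N^2$-grading $I=\bigoplus I_{(k,\ell)}$. Then $\dim I_{(3,0)}=\dim I_{(0,3)}=17$ and $\dim I_{(2,1)}=\dim I_{(1,2)}=66$.
   Context: All vector spaces over $\mathbb C$; $TX$ is the tensor algebra; $\alpha\otimes\beta$ is the tensor product of linear maps, $1_X$ the identity; $\mathbb C\otimes X\cong X\cong X\otimes\mathbb C$. A BQD $\mathcal L$ consists of $3$-dimensional vector spaces $V,W$, linear maps $A:V\otimes V\to W$, $a:W\to V\otimes V$, $B:W\otimes W\to V$, $b:V\to W\otimes W$, $C:W\otimes V\to\mathbb C$, $c:\mathbb C\to V\otimes W$, $D:V\otimes W\to\mathbb C$, $d:\mathbb C\to W\otimes V$, and scalars $q,\omega$ with $q\neq0$, $q^2\neq-1$, $\omega^3=1$, such that, with $\kappa=q^{-2}+1+q^2$, $\rho=(q+q^{-1})^{-2}$: $(1_V\otimes C)(c\otimes 1_V)=1_V$; $(D\otimes 1_V)(1_V\otimes d)=1_V$; $Aa=1_W$; $C(A\otimes 1_V)=\omega D(1_V\otimes A)$; $(1_V\otimes a)c=\omega(a\otimes 1_V)d$; $(1_V\otimes D)(a\otimes 1_W)=B$; $\omega^2(1_W\otimes A)(d\otimes 1_V)=b$; $\omega(C\otimes 1_V)(1_W\otimes a)=B$; $(A\otimes 1_W)(1_V\otimes c)=b$; $Dc=\kappa$; $Cd=\kappa$; $(1_V\otimes A)(a\otimes 1_V)(A\otimes 1_V)(1_V\otimes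 a)=\rho(1_{V\otimes W}+cD)$; $(A\otimes 1_V)(1_V\otimes a)(1_V\otimes A)(a\otimes 1_V)=\rho(1_{W\otimes V}+dC)$; and either $q^2=1$ or $q^2$ is not a root of unity. Let $G:=(1_V\otimes A)(a\otimes 1_V):W\otimes V\to V\otimes W$. $I$ is the two-sided ideal of $T(V\oplus W)$ generated by $\operatorname{Im}a$, $\operatorname{Im}b$, $\operatorname{Im}c$ and all $w\otimes v+(q+q^{-1})G(w\otimes v)$ ($v\in V,w\in W$); $T(V\oplus W)$ is $\mathbb N^2$-graded with $V$ in degree $(1,0)$, $W$ in degree $(0,1)$, and $I$ is homogeneous. *)

theory Defs
  imports Complex_Main "HOL-Library.Numeral_Type" "HOL-Library.Function_Algebras"
begin

text \<open>Coordinates: V and W are identified with complex 3-space via fixed bases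
  v_0,v_1,v_2 and w_0,w_1,w_2 (index type 3). Structure maps are given by their
  coefficient tensors:
  A(v_i x v_j) = sum_k A i j k w_k;   a(w_k) = sum_{i,j} a k i j v_i x v_j;
  B(w_i x w_j) = sum_k B i j k v_k;   b(v_k) = sum_{i,j} b k i j w_i x w_j;
  C(w_i x v_j) = C i j;   c(1) = sum_{i,j} c i j v_i x w_j;
  D(v_i x w_j) = D i j;   d(1) = sum_{i,j} d i j w_i x v_j.\<close>

type_synonym idx = "3"
type_synonym t3 = "idx \<Rightarrow> idx \<Rightarrow> idx \<Rightarrow> complex"
type_synonym t2 = "idx \<Rightarrow> idx \<Rightarrow> complex"

definition kdelta :: "idx \<Rightarrow> idx \<Rightarrow> complex" where
  "kdelta i j = (if i = j then 1 else 0)"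

text \<open>G = (1_V x A)(a x 1_V) : W x V -> V x W;  G(w_k x v_m) = sum_{i,l} Gmap a A k m i l v_i x w_l\<close>
definition Gmap :: "t3 \<Rightarrow> t3 \<Rightarrow> idx \<Rightarrow> idx \<Rightarrow> idx \<Rightarrow> idx \<Rightarrow> complex" where
  "Gmap a A k m i l = (\<Sum>j\<in>UNIV. a k i j * A j m l)"

text \<open>H = (A x 1_V)(1_V x a) : V x W -> W x V;  H(v_m x w_k) = sum_{l,j} Hmap a A m k l j w_l x v_j\<close>
definition Hmap :: "t3 \<Rightarrow> t3 \<Rightarrow> idx \<Rightarrow> idx \<Rightarrow> idx \<Rightarrow> idx \<Rightarrow> complex" where
  "Hmap a A m k l j = (\<Sum>i\<in>UNIV. A m i l * a k i j)"

definition BQD :: "complex \<Rightarrow> complex \<Rightarrow> t3 \<Rightarrow> t3 \<Rightarrow> t3 \<Rightarrow> t3 \<Rightarrow> t2 \<Rightarrow> t2 \<Rightarrow> t2 \<Rightarrow> t2 \<Rightarrow> bool" where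
  "BQD q \<omega> A a B b C c D d \<longleftrightarrow>
    (let \<kappa> = inverse (q^2) + 1 + q^2; \<rho> = inverse ((q + inverse q)^2) in
    q \<noteq> 0 \<and> q^2 \<noteq> -1 \<and> \<omega>^3 = 1 \<and>
    \<comment> \<open>(1_V x C)(c x 1_V) = 1_V\<close>
    (\<forall>i m. (\<Sum>j\<in>UNIV. c i j * C j m) = kdelta i m) \<and>
    \<comment> \<open>(D x 1_V)(1_V x d) = 1_V\<close>
    (\<forall>m j. (\<Sum>i\<in>UNIV. D m i * d i j) = kdelta m j) \<and>
    \<comment> \<open>A a = 1_W\<close>
    (\<forall>k l. (\<Sum>i\<in>UNIV. \<Sum>j\<in>UNIV. a k i j * A i j l) = kdelta k l) \<and>
    \<comment> \<open>C(A x 1_V) = omega D(1_V x A)\<close>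
    (\<forall>i j m. (\<Sum>k\<in>UNIV. A i j k * C k m) = \<omega> * (\<Sum>k\<in>UNIV. A j m k * D i k)) \<and>
    \<comment> \<open>(1_V x a)c = omega (a x 1_V)d\<close>
    (\<forall>x y z. (\<Sum>j\<in>UNIV. c x j * a j y z) = \<omega> * (\<Sum>j\<in>UNIV. d j z * a j x y)) \<and>
    \<comment> \<open>(1_V x D)(a x 1_W) = B\<close>
    (\<forall>k l i. B k l i = (\<Sum>j\<in>UNIV. a k i j * D j l)) \<and>
    \<comment> \<open>omega^2 (1_W x A)(d x 1_V) = b\<close>
    (\<forall>m i l. b m i l = \<omega>^2 * (\<Sum>j\<in>UNIV. d i j * A j m l)) \<and>
    \<comment> \<open>omega (C x 1_V)(1_W x a) = B\<close>
    (\<forall>k l j. B k l j = \<omega> * (\<Sum>i\<in>UNIV. C k i * a l i j)) \<and>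
    \<comment> \<open>(A x 1_W)(1_V x c) = b\<close>
    (\<forall>m l j. b m l j = (\<Sum>i\<in>UNIV. c i j * A m i l)) \<and>
    \<comment> \<open>D c = kappa,  C d = kappa\<close>
    (\<Sum>i\<in>UNIV. \<Sum>j\<in>UNIV. c i j * D i j) = \<kappa> \<and>
    (\<Sum>i\<in>UNIV. \<Sum>j\<in>UNIV. d i j * C i j) = \<kappa> \<and>
    \<comment> \<open>G H = rho (1_{V x W} + c D)\<close>
    (\<forall>m k p r. (\<Sum>l\<in>UNIV. \<Sum>j\<in>UNIV. Hmap a A m k l j * Gmap a A l j p r)
        = \<rho> * (kdelta m p * kdelta k r + D m k * c p r)) \<and>
    \<comment> \<open>H G = rho (1_{W x V} + d C)\<close>
    (\<forall>k m x y. (\<Sum>i\<in>UNIV. \<Sum>l\<in>UNIV. Gmap a A k m i l * Hmap a A i l x y)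
        = \<rho> * (kdelta k x * kdelta m y + C k m * d x y)) \<and>
    (q^2 = 1 \<or> \<not> (\<exists>n::nat. n > 0 \<and> (q^2)^n = 1)))"

text \<open>Tensor algebra T(V + W) = free associative algebra on v_0,v_1,v_2,w_0,w_1,w_2:
  finitely supported functions on words in the six letters.\<close>
datatype letter = Vl idx | Wl idx

type_synonym ncpoly = "letter list \<Rightarrow> complex"

definition tensor_alg :: "ncpoly set" where
  "tensor_alg = {p. finite {w. p w \<noteq> 0}}"

definition ncmult :: "ncpoly \<Rightarrow> ncpoly \<Rightarrow> ncpoly" where
  "ncmult p r = (\<lambda>w. \<Sum>n\<in>{..length w}. p (take n w) * r (drop n w))"

definition ncscale :: "complex \<Rightarrow> ncpoly \<Rightarrow> ncpoly" where
  "ncscale s p = (\<lambda>w. s * p w)"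

inductive_set ideal_gen :: "ncpoly set \<Rightarrow> ncpoly set" for S where
  gen: "s \<in> S \<Longrightarrow> s \<in> ideal_gen S"
| zero: "0 \<in> ideal_gen S"
| add: "x \<in> ideal_gen S \<Longrightarrow> y \<in> ideal_gen S \<Longrightarrow> x + y \<in> ideal_gen S"
| scale: "x \<in> ideal_gen S \<Longrightarrow> ncscale s x \<in> ideal_gen S"
| lmult: "x \<in> ideal_gen S \<Longrightarrow> t \<in> tensor_alg \<Longrightarrow> ncmult t x \<in> ideal_gen S"
| rmult: "x \<in> ideal_gen S \<Longrightarrow> t \<in> tensor_alg \<Longrightarrow> ncmult x t \<in> ideal_gen S"

text \<open>Generators: Im a, Im b, Im c, and w x v + (q + q^-1) G(w x v) (for basis vectors,
  which suffices by linearity).\<close>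
definition shape_gens :: "complex \<Rightarrow> t3 \<Rightarrow> t3 \<Rightarrow> t3 \<Rightarrow> t2 \<Rightarrow> ncpoly set" where
  "shape_gens q A a b c =
     {(\<lambda>w. \<Sum>i\<in>UNIV. \<Sum>j\<in>UNIV. if w = [Vl i, Vl j] then a k i j else 0) | k. True}
   \<union> {(\<lambda>w. \<Sum>i\<in>UNIV. \<Sum>j\<in>UNIV. if w = [Wl i, Wl j] then b m i j else 0) | m. True}
   \<union> {(\<lambda>w. \<Sum>i\<in>UNIV. \<Sum>j\<in>UNIV. if w = [Vl i, Wl j] then c i j else 0)}
   \<union> {(\<lambda>w. (if w = [Wl k, Vl m] then 1 else 0)
          + (q + inverse q) * (\<Sum>i\<in>UNIV. \<Sum>l\<in>UNIV. if w = [Vl i, Wl l] then Gmap a A k m i l else 0))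
       | k m. True}"

definition shape_ideal :: "complex \<Rightarrow> t3 \<Rightarrow> t3 \<Rightarrow> t3 \<Rightarrow> t2 \<Rightarrow> ncpoly set" where
  "shape_ideal q A a b c = ideal_gen (shape_gens q A a b c)"

fun isV :: "letter \<Rightarrow> bool" where
  "isV (Vl _) = True" | "isV (Wl _) = False"

definition bideg_part :: "ncpoly set \<Rightarrow> nat \<Rightarrow> nat \<Rightarrow> ncpoly set" where
  "bideg_part J k l = {p \<in> J. \<forall>w. p w \<noteq> 0 \<longrightarrow>
      length (filter isV w) = k \<and> length (filter (\<lambda>x. \<not> isV x) w) = l}"

definition cdim :: "ncpoly set \<Rightarrow> nat" where
  "cdim S = vector_space.dim ncscale S"

end

theory Submission
  imports Defs
begin


lemma idx_exhaust: fixes x :: idx shows "x = 0 \<or> x = 1 \<or> x = 2"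
proof (induct x)
  case (of_int z)
  then have "z = 0 \<or> z = 1 \<or> z = 2" by fastforce
  then show ?case by auto
qed
lemma UNIV_idx: "(UNIV::idx set) = {0,1,2}" using idx_exhaust by auto
lemma sum_idx: "sum f (UNIV::idx set) = f 0 + f 1 + f 2"
  unfolding UNIV_idx by (simp add: ac_simps)

lemma kdelta_sym: "kdelta i j = kdelta j i" by (simp add: kdelta_def eq_commute)

lemma kdelta_sum1[simp]: "(\<Sum>j\<in>UNIV. f j * kdelta j m) = f m"
proof -
  have eq: "(\<lambda>j. f j * kdelta j m) = (\<lambda>j. if j = m then f j else 0)" by (auto simp: kdelta_def)
  show ?thesis by (subst eq) simp
qed
lemma kdelta_sum2[simp]: "(\<Sum>j\<in>UNIV. kdelta m j * f j) = f m"
proof -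
  have eq: "(\<lambda>j. kdelta m j * f j) = (\<lambda>j. if m = j then f j else 0)" by (auto simp: kdelta_def)
  show ?thesis by (subst eq) simp
qed

lemma kdelta_sum3[simp]: "(\<Sum>j\<in>UNIV. f j * kdelta m j) = f m"
  using kdelta_sum1[of f m] by (simp add: kdelta_sym)
lemma kdelta_sum4[simp]: "(\<Sum>j\<in>UNIV. kdelta j m * f j) = f m"
  using kdelta_sum2[of m f] by (simp add: kdelta_sym)

locale bqd =
  fixes q \<omega> :: complex and A a B b :: t3 and C c D d :: t2
  assumes BQD: "BQD q \<omega> A a B b C c D d"
begin

definition "\<kappa> = inverse (q^2) + 1 + q^2"
definition "\<rho> = inverse ((q + inverse q)^2)"
definition "\<tau> = q + inverse q"

lemma ax:
  "q \<noteq> 0" "q^2 \<noteq> -1" "\<omega>^3 = 1"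
  "\<And>i m. (\<Sum>j\<in>UNIV. c i j * C j m) = kdelta i m"
  "\<And>m j. (\<Sum>i\<in>UNIV. D m i * d i j) = kdelta m j"
  "\<And>k l. (\<Sum>i\<in>UNIV. \<Sum>j\<in>UNIV. a k i j * A i j l) = kdelta k l"
  "\<And>i j m. (\<Sum>k\<in>UNIV. A i j k * C k m) = \<omega> * (\<Sum>k\<in>UNIV. A j m k * D i k)"
  "\<And>x y z. (\<Sum>j\<in>UNIV. c x j * a j y z) = \<omega> * (\<Sum>j\<in>UNIV. d j z * a j x y)"
  "\<And>k l i. B k l i = (\<Sum>j\<in>UNIV. a k i j * D j l)"
  "\<And>m i l. b m i l = \<omega>^2 * (\<Sum>j\<in>UNIV. d i j * A j m l)"
  "\<And>k l j. B k l j = \<omega> * (\<Sum>i\<in>UNIV. C k i * a l i j)"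
  "\<And>m l j. b m l j = (\<Sum>i\<in>UNIV. c i j * A m i l)"
  "(\<Sum>i\<in>UNIV. \<Sum>j\<in>UNIV. c i j * D i j) = \<kappa>"
  "(\<Sum>i\<in>UNIV. \<Sum>j\<in>UNIV. d i j * C i j) = \<kappa>"
  "\<And>m k p r. (\<Sum>l\<in>UNIV. \<Sum>j\<in>UNIV. Hmap a A m k l j * Gmap a A l j p r)
        = \<rho> * (kdelta m p * kdelta k r + D m k * c p r)"
  "\<And>k m x y. (\<Sum>i\<in>UNIV. \<Sum>l\<in>UNIV. Gmap a A k m i l * Hmap a A i l x y)
        = \<rho> * (kdelta k x * kdelta m y + C k m * d x y)"
  "q^2 = 1 \<or> \<not> (\<exists>n::nat. n > 0 \<and> (q^2)^n = 1)"
  using BQD unfolding BQD_def Let_def \<kappa>_def \<rho>_def by auto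



lemma omega_nz: "\<omega> \<noteq> 0" using ax(3) by auto
lemma q_nz: "q \<noteq> 0" using ax(1) .

lemma tau_sq: "\<tau>^2 = \<kappa> + 1"
  using q_nz by (simp add: \<tau>_def \<kappa>_def power2_eq_square field_simps)

lemma kappa_nz: "\<kappa> \<noteq> 0"
proof
  assume k0: "\<kappa> = 0"
  have e: "q^4 + q^2 + 1 = 0"
  proof -
    have "q^2 * \<kappa> = 0" using k0 by simp
    moreover have "q^2 * \<kappa> = q^4 + q^2 + 1" using q_nz
      by (simp add: \<kappa>_def power2_eq_square field_simps power4_eq_xxxx)
    ultimately show ?thesis by simp
  qed
  have "(q^2)^3 = 1"
  proof -
    have "(q^2)^3 - 1 = (q^2 - 1) * (q^4 + q^2 + 1)" by (simp add: algebra_simps power2_eq_square power4_eq_xxxx power3_eq_cube)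
    then show ?thesis using e by simp
  qed
  moreover have "q^2 \<noteq> 1"
  proof
    assume "q^2 = 1"
    then have "q^4 = 1" by (metis power2_eq_square power4_eq_xxxx mult.assoc mult_1_right)
    with e \<open>q^2 = 1\<close> show False by simp
  qed
  ultimately show False using ax(17) by (metis zero_less_numeral)
qed

lemma kappa_n1: "\<kappa> \<noteq> 1"
proof
  assume k1: "\<kappa> = 1"
  have e: "q^4 + 1 = 0"
  proof -
    have "q^2 * (\<kappa> - 1) = 0" using k1 by simp
    moreover have "q^2 * (\<kappa> - 1) = q^4 + 1" using q_nz
      by (simp add: \<kappa>_def power2_eq_square field_simps power4_eq_xxxx)
    ultimately show ?thesis by simp
  qed
  have "(q^2)^4 = 1"
  proof -
    have "(q^2)^4 - 1 = (q^4 - 1) * (q^4 + 1)" by (simp add: algebra_simps power2_eq_square power4_eq_xxxx)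
    then show ?thesis using e by simp
  qed
  moreover have "q^2 \<noteq> 1"
  proof
    assume "q^2 = 1"
    then have "q^4 = 1" by (metis power2_eq_square power4_eq_xxxx mult.assoc mult_1_right)
    with e show False by simp
  qed
  ultimately show False using ax(17) by (metis zero_less_numeral)
qed

lemma tau_nz: "\<tau> \<noteq> 0"
proof
  assume "\<tau> = 0"
  then have "\<kappa> + 1 = 0" using tau_sq by simp
  then have "q^2 * (\<kappa> + 1) = 0" by simp
  moreover have "q^2 * (\<kappa> + 1) = (q^2 + 1)^2" using q_nz
    by (simp add: \<kappa>_def power2_eq_square field_simps)
  ultimately have "q^2 + 1 = 0" by simp
  then have "q^2 = -1" by (metis add.commute add_eq_0_iff)
  with ax(2) show False by simp
qed

lemma rho_tau: "\<rho> * \<tau>^2 = 1"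
  using tau_nz by (simp add: \<rho>_def \<tau>_def[symmetric])

lemma rho_kappa: "\<rho> * (\<kappa> + 1) = 1"
  using rho_tau tau_sq by simp

lemma rho_n1: "\<rho> \<noteq> 1"
proof
  assume "\<rho> = 1"
  then have "\<kappa> + 1 = 1" using rho_kappa by simp
  then show False using kappa_nz by simp
qed


lemma om2inv: "\<omega>^2 * inverse \<omega> * inverse \<omega> = 1"
  using omega_nz by (simp add: power2_eq_square field_simps)

lemma da: "(\<Sum>k\<in>UNIV. d k z * a k x y) = inverse \<omega> * (\<Sum>k\<in>UNIV. c x k * a k y z)"
  using ax(8)[of x y z] omega_nz by (simp add: field_simps)

lemma AD: "(\<Sum>l\<in>UNIV. A j m l * D i l) = inverse \<omega> * (\<Sum>l\<in>UNIV. A i j l * C l m)"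
  using ax(7)[of i j m] omega_nz by (simp add: field_simps)

lemma dA: "(\<Sum>t\<in>UNIV. d y t * A t j l) = inverse (\<omega>^2) * b j y l"
  using ax(10)[of j y l] omega_nz by (simp add: field_simps)

lemma Bb: "(\<Sum>k\<in>UNIV. \<Sum>l\<in>UNIV. b m k l * B k l i) = kdelta m i"
proof -
  have "(\<Sum>k\<in>UNIV. \<Sum>l\<in>UNIV. b m k l * B k l i)
     = (\<Sum>k\<in>UNIV. \<Sum>l\<in>UNIV. (\<omega>^2 * (\<Sum>j\<in>UNIV. d k j * A j m l)) * (\<Sum>j'\<in>UNIV. a k i j' * D j' l))"
    by (simp add: ax(9,10))
  also have "\<dots> = \<omega>^2 * (\<Sum>j\<in>UNIV. \<Sum>j'\<in>UNIV. (\<Sum>k\<in>UNIV. d k j * a k i j') * (\<Sum>l\<in>UNIV. A j m l * D j' l))"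
    by (simp only: sum_idx) (simp add: algebra_simps)
  also have "\<dots> = \<omega>^2 * (\<Sum>j\<in>UNIV. \<Sum>j'\<in>UNIV. (inverse \<omega> * (\<Sum>k\<in>UNIV. c i k * a k j' j)) * (inverse \<omega> * (\<Sum>l\<in>UNIV. A j' j l * C l m)))"
    by (simp only: da AD)
  also have "\<dots> = (\<omega>^2 * inverse \<omega> * inverse \<omega>) * (\<Sum>k\<in>UNIV. \<Sum>l\<in>UNIV. c i k * (\<Sum>j'\<in>UNIV. \<Sum>j\<in>UNIV. a k j' j * A j' j l) * C l m)"
    by (simp only: sum_idx) (simp add: algebra_simps)
  also have "\<dots> = (\<Sum>k\<in>UNIV. \<Sum>l\<in>UNIV. c i k * kdelta k l * C l m)"
    by (simp only: om2inv ax(6)) simp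
  also have "\<dots> = kdelta i m"
    by (simp add: ax(4) mult.assoc sum_distrib_left[symmetric])
  finally show ?thesis by (simp add: kdelta_sym)
qed


abbreviation "G \<equiv> Gmap a A"
abbreviation "H \<equiv> Hmap a A"

lemma I1: "(\<Sum>y\<in>UNIV. c x y * G y j i l) = inverse \<omega> * (\<Sum>k\<in>UNIV. b j k l * a k x i)"
proof -
  have "(\<Sum>y\<in>UNIV. c x y * G y j i l) = (\<Sum>t\<in>UNIV. (\<Sum>y\<in>UNIV. c x y * a y i t) * A t j l)"
    unfolding Gmap_def by (simp only: sum_idx) (simp add: algebra_simps)
  also have "\<dots> = (\<Sum>t\<in>UNIV. (\<omega> * (\<Sum>y\<in>UNIV. d y t * a y x i)) * A t j l)"
    by (simp only: ax(8))
  also have "\<dots> = \<omega> * (\<Sum>y\<in>UNIV. a y x i * (\<Sum>t\<in>UNIV. d y t * A t j l))"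
    by (simp only: sum_idx) (simp add: algebra_simps)
  also have "\<dots> = \<omega> * (\<Sum>y\<in>UNIV. a y x i * (inverse (\<omega>^2) * b j y l))"
    by (simp only: dA)
  also have "\<dots> = (\<omega> * inverse (\<omega>^2)) * (\<Sum>y\<in>UNIV. b j y l * a y x i)"
    by (simp only: sum_idx) (simp add: algebra_simps)
  also have "\<omega> * inverse (\<omega>^2) = inverse \<omega>"
    using omega_nz by (simp add: power2_eq_square field_simps)
  finally show ?thesis .
qed

lemma aG: "(\<Sum>x\<in>UNIV. a k x y * G j x i l) = (\<Sum>t\<in>UNIV. a j i t * H t k l y)"
  unfolding Gmap_def Hmap_def by (simp only: sum_idx) (simp add: algebra_simps)

lemma I2: "(\<Sum>x\<in>UNIV. \<Sum>y\<in>UNIV. \<Sum>l\<in>UNIV. a k x y * G j x i l * G l y i' l')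
   = \<rho> * (a j i i' * kdelta k l' + B j k i * c i' l')"
proof -
  have "(\<Sum>x\<in>UNIV. \<Sum>y\<in>UNIV. \<Sum>l\<in>UNIV. a k x y * G j x i l * G l y i' l')
     = (\<Sum>y\<in>UNIV. \<Sum>l\<in>UNIV. (\<Sum>x\<in>UNIV. a k x y * G j x i l) * G l y i' l')"
    by (simp only: sum_idx) (simp add: algebra_simps)
  also have "\<dots> = (\<Sum>y\<in>UNIV. \<Sum>l\<in>UNIV. (\<Sum>t\<in>UNIV. a j i t * H t k l y) * G l y i' l')"
    by (simp only: aG)
  also have "\<dots> = (\<Sum>t\<in>UNIV. a j i t * (\<Sum>l\<in>UNIV. \<Sum>y\<in>UNIV. H t k l y * G l y i' l'))"
    by (simp only: sum_idx) (simp add: algebra_simps)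
  also have "\<dots> = (\<Sum>t\<in>UNIV. a j i t * (\<rho> * (kdelta t i' * kdelta k l' + D t k * c i' l')))"
    by (simp only: ax(15))
  also have "\<dots> = \<rho> * ((\<Sum>t\<in>UNIV. a j i t * kdelta t i') * kdelta k l' + (\<Sum>t\<in>UNIV. a j i t * D t k) * c i' l')"
    by (simp only: sum_idx) (simp add: algebra_simps)
  also have "\<dots> = \<rho> * (a j i i' * kdelta k l' + B j k i * c i' l')"
    by (simp add: ax(9))
  finally show ?thesis .
qed

lemma I3: "(\<Sum>y\<in>UNIV. c i y * B y z p) = \<omega> * a z i p"
proof -
  have "(\<Sum>y\<in>UNIV. c i y * B y z p) = (\<Sum>y\<in>UNIV. c i y * (\<omega> * (\<Sum>t\<in>UNIV. C y t * a z t p)))"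
    by (simp only: ax(11))
  also have "\<dots> = \<omega> * (\<Sum>t\<in>UNIV. (\<Sum>y\<in>UNIV. c i y * C y t) * a z t p)"
    by (simp only: sum_idx) (simp add: algebra_simps)
  also have "\<dots> = \<omega> * a z i p"
    by (simp add: ax(4))
  finally show ?thesis .
qed

lemma I4: "(\<Sum>x\<in>UNIV. c x y * G j x i l) = (\<Sum>t\<in>UNIV. a j i t * b t l y)"
  unfolding Gmap_def ax(12) by (simp only: sum_idx) (simp add: algebra_simps)

lemma bG: "(\<Sum>y\<in>UNIV. b m x y * G y j i l) = inverse \<omega> * (\<Sum>y\<in>UNIV. H m y x i * b j y l)"
proof -
  have "(\<Sum>y\<in>UNIV. b m x y * G y j i l)
      = (\<Sum>u\<in>UNIV. \<Sum>s\<in>UNIV. A m u x * A s j l * (\<Sum>y\<in>UNIV. c u y * a y i s))"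
    unfolding Gmap_def ax(12)[of m x] by (simp only: sum_idx) (simp add: algebra_simps)
  also have "\<dots> = (\<Sum>u\<in>UNIV. \<Sum>s\<in>UNIV. A m u x * A s j l * (\<omega> * (\<Sum>y\<in>UNIV. d y s * a y u i)))"
    by (simp only: ax(8))
  also have "\<dots> = \<omega> * (\<Sum>y\<in>UNIV. (\<Sum>u\<in>UNIV. A m u x * a y u i) * (\<Sum>s\<in>UNIV. d y s * A s j l))"
    by (simp only: sum_idx) (simp add: algebra_simps)
  also have "\<dots> = \<omega> * (\<Sum>y\<in>UNIV. H m y x i * (inverse (\<omega>^2) * b j y l))"
    by (simp only: dA Hmap_def)
  also have "\<dots> = (\<omega> * inverse (\<omega>^2)) * (\<Sum>y\<in>UNIV. H m y x i * b j y l)"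
    by (simp only: sum_idx) (simp add: algebra_simps)
  also have "\<omega> * inverse (\<omega>^2) = inverse \<omega>"
    using omega_nz by (simp add: power2_eq_square field_simps)
  finally show ?thesis .
qed

lemma I5: "(\<Sum>x\<in>UNIV. \<Sum>i\<in>UNIV. \<Sum>y\<in>UNIV. b m x y * G y j i l * G x i i' l')
  = inverse \<omega> * \<rho> * (kdelta i' m * b j l' l + c i' l' * (\<Sum>t\<in>UNIV. D m t * b j t l))"
proof -
  have "(\<Sum>x\<in>UNIV. \<Sum>i\<in>UNIV. \<Sum>y\<in>UNIV. b m x y * G y j i l * G x i i' l')
     = (\<Sum>x\<in>UNIV. \<Sum>i\<in>UNIV. (\<Sum>y\<in>UNIV. b m x y * G y j i l) * G x i i' l')"
    by (simp only: sum_idx) (simp add: algebra_simps)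
  also have "\<dots> = (\<Sum>x\<in>UNIV. \<Sum>i\<in>UNIV. (inverse \<omega> * (\<Sum>y\<in>UNIV. H m y x i * b j y l)) * G x i i' l')"
    by (simp only: bG)
  also have "\<dots> = inverse \<omega> * (\<Sum>y\<in>UNIV. b j y l * (\<Sum>x\<in>UNIV. \<Sum>i\<in>UNIV. H m y x i * G x i i' l'))"
    by (simp only: sum_idx) (simp add: algebra_simps)
  also have "\<dots> = inverse \<omega> * (\<Sum>y\<in>UNIV. b j y l * (\<rho> * (kdelta m i' * kdelta y l' + D m y * c i' l')))"
    by (simp only: ax(15))
  also have "\<dots> = inverse \<omega> * \<rho> * (kdelta m i' * (\<Sum>y\<in>UNIV. b j y l * kdelta y l') + c i' l' * (\<Sum>t\<in>UNIV. D m t * b j t l))"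
    by (simp only: sum_idx) (simp add: algebra_simps)
  also have "\<dots> = inverse \<omega> * \<rho> * (kdelta i' m * b j l' l + c i' l' * (\<Sum>t\<in>UNIV. D m t * b j t l))"
    by (simp add: kdelta_sym)
  finally show ?thesis .
qed

lemma I6: "(\<Sum>y\<in>UNIV. b k x y * B y z m) = \<omega> * H k z x m"
proof -
  have "(\<Sum>y\<in>UNIV. b k x y * B y z m)
     = \<omega> * (\<Sum>u\<in>UNIV. \<Sum>i\<in>UNIV. A k u x * a z i m * (\<Sum>y\<in>UNIV. c u y * C y i))"
    unfolding ax(12)[of k x] ax(11)[of _ z m] by (simp only: sum_idx) (simp add: algebra_simps)
  also have "\<dots> = \<omega> * (\<Sum>u\<in>UNIV. A k u x * a z u m)"
    by (simp add: ax(4) sum_distrib_left[symmetric] mult.assoc)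
  finally show ?thesis by (simp add: Hmap_def)
qed

lemma I7: "(\<Sum>y\<in>UNIV. b k y z * B x y m) = \<omega>^2 * G x k m z"
proof -
  have "(\<Sum>y\<in>UNIV. b k y z * B x y m)
     = \<omega>^2 * (\<Sum>j\<in>UNIV. \<Sum>s\<in>UNIV. a x m j * A s k z * (\<Sum>y\<in>UNIV. D j y * d y s))"
    unfolding ax(10)[of k _ z] ax(9)[of x _ m] by (simp only: sum_idx) (simp add: algebra_simps)
  also have "\<dots> = \<omega>^2 * (\<Sum>j\<in>UNIV. a x m j * A j k z)"
    by (simp add: ax(5) sum_distrib_left[symmetric] mult.assoc)
  finally show ?thesis by (simp add: Gmap_def)
qed

lemma Rb: "(\<Sum>k\<in>UNIV. c k z * b k x y) = \<omega>^2 * (\<Sum>k\<in>UNIV. d x k * b k y z)"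
proof -
  have "(\<Sum>k\<in>UNIV. c k z * b k x y) = \<omega>^2 * (\<Sum>j\<in>UNIV. d x j * (\<Sum>k\<in>UNIV. c k z * A j k y))"
    unfolding ax(10)[of _ x y] by (simp only: sum_idx) (simp add: algebra_simps)
  also have "\<dots> = \<omega>^2 * (\<Sum>k\<in>UNIV. d x k * b k y z)"
    by (simp only: ax(12))
  finally show ?thesis .
qed

lemma I8: "(\<Sum>i\<in>UNIV. \<Sum>m\<in>UNIV. \<Sum>y\<in>UNIV. a z' i m * b m y z * D i y) = \<omega>^2 * kdelta z' z"
proof -
  have "(\<Sum>i\<in>UNIV. \<Sum>m\<in>UNIV. \<Sum>y\<in>UNIV. a z' i m * b m y z * D i y)
     = \<omega>^2 * (\<Sum>i\<in>UNIV. \<Sum>m\<in>UNIV. \<Sum>s\<in>UNIV. a z' i m * A s m z * (\<Sum>y\<in>UNIV. D i y * d y s))"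
    unfolding ax(10)[of _ _ z] by (simp only: sum_idx) (simp add: algebra_simps)
  also have "\<dots> = \<omega>^2 * (\<Sum>i\<in>UNIV. \<Sum>m\<in>UNIV. a z' i m * A i m z)"
    by (simp add: ax(5) sum_distrib_left[symmetric] mult.assoc)
  also have "\<dots> = \<omega>^2 * kdelta z' z" by (simp only: ax(6))
  finally show ?thesis .
qed

end


interpretation nc: vector_space ncscale
  by unfold_locales (auto simp: ncscale_def fun_eq_iff algebra_simps)

lemma fsum_apply: "(\<Sum>i\<in>I. (f i :: ncpoly)) w = (\<Sum>i\<in>I. f i w)"
proof (cases "finite I")
  case True then show ?thesis by (induction I rule: finite_induct) auto
next
  case False then show ?thesis by simp
qed

lemma ncscale_apply[simp]: "ncscale s p w = s * p w" by (simp add: ncscale_def)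

lemma times_if0: "(x::complex) * (if P then y else 0) = (if P then x * y else 0)" by simp
lemma if0_times: "(if P then y else 0) * (x::complex) = (if P then y * x else 0)" by simp
lemma sum_if_and: "(\<Sum>j\<in>A. if P then f j else 0) = (if P then (\<Sum>j\<in>A. f j) else (0::complex))" by simp
lemma if_and0: "(if P \<and> Q then x else (0::complex)) = (if P then if Q then x else 0 else 0)" by simp

definition lett :: "letter \<Rightarrow> ncpoly" where "lett x = (\<lambda>w. if w = [x] then 1 else 0)"

lemma lett_eval[simp]: "lett x [] = 0" "lett x [y] = (if y = x then 1 else 0)" "lett x (y1 # y2 # ys) = 0"
  by (auto simp: lett_def)

lemma lett_tensor: "lett x \<in> tensor_alg"
proof -
  have "{w. lett x w \<noteq> 0} = {[x]}" by (auto simp: lett_def)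
  then show ?thesis by (simp add: tensor_alg_def)
qed

lemma ncmult_0: "ncmult t p [] = t [] * p []"
  by (simp add: ncmult_def)
lemma ncmult_1: "ncmult t p [x1] = t [] * p [x1] + t [x1] * p []"
  by (simp add: ncmult_def atMost_Suc)
lemma ncmult_2: "ncmult t p [x1,x2] = t [] * p [x1,x2] + t [x1] * p [x2] + t [x1,x2] * p []"
  by (simp add: ncmult_def atMost_Suc numeral_2_eq_2)
lemma ncmult_3: "ncmult t p [x1,x2,x3] = t [] * p [x1,x2,x3] + t [x1] * p [x2,x3] + t [x1,x2] * p [x3] + t [x1,x2,x3] * p []"
  by (simp add: ncmult_def atMost_Suc numeral_3_eq_3)

lemma ncmult_add_r: "ncmult t (x + y) = ncmult t x + ncmult t y"
  by (simp add: ncmult_def fun_eq_iff algebra_simps sum.distrib)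
lemma ncmult_add_l: "ncmult (x + y) t = ncmult x t + ncmult y t"
  by (simp add: ncmult_def fun_eq_iff algebra_simps sum.distrib)
lemma ncmult_scale_r: "ncmult t (ncscale s x) = ncscale s (ncmult t x)"
  by (simp add: ncmult_def fun_eq_iff algebra_simps sum_distrib_left)
lemma ncmult_scale_l: "ncmult (ncscale s x) t = ncscale s (ncmult x t)"
  by (simp add: ncmult_def fun_eq_iff algebra_simps sum_distrib_left)
lemma ncmult_zero_r: "ncmult t 0 = 0"
  by (simp add: ncmult_def fun_eq_iff)
lemma ncmult_zero_l: "ncmult 0 t = 0"
  by (simp add: ncmult_def fun_eq_iff)

definition supp_len :: "ncpoly \<Rightarrow> nat \<Rightarrow> bool" where
  "supp_len p n \<longleftrightarrow> (\<forall>w. p w \<noteq> 0 \<longrightarrow> length w = n)"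

lemma supp_len_ncmult: assumes "supp_len p n1" "supp_len g n2" shows "supp_len (ncmult p g) (n1 + n2)"
  unfolding supp_len_def
proof (intro allI impI)
  fix w assume "ncmult p g w \<noteq> 0"
  then obtain n where "n \<in> {..length w}" "p (take n w) * g (drop n w) \<noteq> 0"
    unfolding ncmult_def by (meson sum.neutral)
  then have "length (take n w) = n1" "length (drop n w) = n2" using assms unfolding supp_len_def by auto
  then show "length w = n1 + n2" by (metis append_take_drop_id length_append)
qed

lemma supp_len_ncmult': "supp_len p n1 \<Longrightarrow> supp_len g n2 \<Longrightarrow> n = n1 + n2 \<Longrightarrow> supp_len (ncmult p g) n"
  using supp_len_ncmult by blast

lemma supp_len_lett: "supp_len (lett x) 1"
  by (simp add: supp_len_def lett_def)

definition restr :: "nat \<Rightarrow> ncpoly \<Rightarrow> ncpoly" where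
  "restr n p = (\<lambda>w. if length w = n then p w else 0)"

lemma restr_supp: "supp_len p n \<Longrightarrow> restr n p = p"
  by (auto simp: restr_def supp_len_def fun_eq_iff)
lemma restr_supp0: "supp_len p n \<Longrightarrow> m \<noteq> n \<Longrightarrow> restr m p = 0"
  by (auto simp: restr_def supp_len_def fun_eq_iff)
lemma restr_add: "restr n (x + y) = restr n x + restr n y"
  by (auto simp: restr_def fun_eq_iff)
lemma restr_scale: "restr n (ncscale s x) = ncscale s (restr n x)"
  by (auto simp: restr_def fun_eq_iff)
lemma restr_zero: "restr n 0 = 0"
  by (auto simp: restr_def fun_eq_iff)

definition prods :: "ncpoly set \<Rightarrow> ncpoly set" where
  "prods S = {ncmult (lett x) g | x g. g \<in> S} \<union> {ncmult g (lett x) | x g. g \<in> S}"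

lemma UNIV_letter: "(UNIV :: letter set) = range Vl \<union> range Wl"
  by (auto intro: letter.exhaust)
lemma finite_letter[simp]: "finite (UNIV :: letter set)"
  unfolding UNIV_letter by simp

lemma span_lmult: assumes "g \<in> nc.span S" shows "ncmult (lett y) g \<in> nc.span (prods S)"
proof -
  have "nc.subspace {g. ncmult (lett y) g \<in> nc.span (prods S)}"
    by (rule nc.subspaceI) (auto simp: ncmult_zero_r ncmult_add_r ncmult_scale_r intro: nc.span_add nc.span_scale nc.span_zero)
  moreover have "S \<subseteq> {g. ncmult (lett y) g \<in> nc.span (prods S)}"
    by (auto simp: prods_def intro!: nc.span_base)
  ultimately show ?thesis using assms nc.span_minimal by blast
qed

lemma span_rmult: assumes "g \<in> nc.span S" shows "ncmult g (lett y) \<in> nc.span (prods S)"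
proof -
  have "nc.subspace {g. ncmult g (lett y) \<in> nc.span (prods S)}"
    by (rule nc.subspaceI) (auto simp: ncmult_zero_l ncmult_add_l ncmult_scale_l intro: nc.span_add nc.span_scale nc.span_zero)
  moreover have "S \<subseteq> {g. ncmult g (lett y) \<in> nc.span (prods S)}"
    by (auto simp: prods_def intro!: nc.span_base)
  ultimately show ?thesis using assms nc.span_minimal by blast
qed

definition Inv :: "ncpoly set \<Rightarrow> ncpoly \<Rightarrow> bool" where
  "Inv S p \<longleftrightarrow> (\<forall>w. length w \<le> 1 \<longrightarrow> p w = 0) \<and> restr 2 p \<in> nc.span S \<and> restr 3 p \<in> nc.span (prods S)"

lemma len3: "length w = 3 \<Longrightarrow> \<exists>x1 x2 x3. w = [x1,x2,x3]"
  by (auto simp: numeral_3_eq_3 length_Suc_conv)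
lemma len2: "length w = 2 \<Longrightarrow> \<exists>x1 x2. w = [x1,x2]"
  by (auto simp: numeral_2_eq_2 length_Suc_conv)

lemma len_le1: "length w \<le> 1 \<Longrightarrow> w = [] \<or> (\<exists>x. w = [x])"
  by (cases w) auto

lemma restr3_lmult:
  assumes "\<forall>w. length w \<le> 1 \<longrightarrow> x w = 0"
  shows "restr 3 (ncmult t x) = ncscale (t []) (restr 3 x) + (\<Sum>y\<in>UNIV. ncscale (t [y]) (ncmult (lett y) (restr 2 x)))"
proof (rule ext)
  fix w :: "letter list"
  show "restr 3 (ncmult t x) w = (ncscale (t []) (restr 3 x) + (\<Sum>y\<in>UNIV. ncscale (t [y]) (ncmult (lett y) (restr 2 x)))) w"
  proof (cases "length w = 3")
    case True
    then obtain x1 x2 x3 where w: "w = [x1,x2,x3]"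
      using len3 by blast
    have "(\<Sum>y\<in>UNIV. ncscale (t [y]) (ncmult (lett y) (restr 2 x))) w = t [x1] * x [x2, x3]"
      unfolding w fsum_apply by (simp add: ncmult_3 restr_def times_if0 if0_times)
    then show ?thesis using assms by (simp add: w ncmult_3 restr_def)
  next
    case False
    have r2: "supp_len (restr 2 x) 2" by (simp add: supp_len_def restr_def)
    have "supp_len (ncmult (lett y) (restr 2 x)) 3" for y
      by (rule supp_len_ncmult'[OF supp_len_lett r2]) simp
    then have "(ncmult (lett y) (restr 2 x)) w = 0" for y using False by (auto simp: supp_len_def)
    then show ?thesis using False by (simp add: restr_def fsum_apply)
  qed
qed

lemma restr3_rmult:
  assumes "\<forall>w. length w \<le> 1 \<longrightarrow> x w = 0"
  shows "restr 3 (ncmult x t) = ncscale (t []) (restr 3 x) + (\<Sum>y\<in>UNIV. ncscale (t [y]) (ncmult (restr 2 x) (lett y)))"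
proof (rule ext)
  fix w :: "letter list"
  show "restr 3 (ncmult x t) w = (ncscale (t []) (restr 3 x) + (\<Sum>y\<in>UNIV. ncscale (t [y]) (ncmult (restr 2 x) (lett y)))) w"
  proof (cases "length w = 3")
    case True
    then obtain x1 x2 x3 where w: "w = [x1,x2,x3]"
      using len3 by blast
    have "(\<Sum>y\<in>UNIV. ncscale (t [y]) (ncmult (restr 2 x) (lett y))) w = x [x1, x2] * t [x3]"
      unfolding w fsum_apply by (simp add: ncmult_3 restr_def times_if0 if0_times)
    then show ?thesis using assms by (simp add: w ncmult_3 restr_def algebra_simps)
  next
    case False
    have r2: "supp_len (restr 2 x) 2" by (simp add: supp_len_def restr_def)
    have "supp_len (ncmult (restr 2 x) (lett y)) 3" for y
      by (rule supp_len_ncmult'[OF r2 supp_len_lett]) simp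
    then have "(ncmult (restr 2 x) (lett y)) w = 0" for y using False by (auto simp: supp_len_def)
    then show ?thesis using False by (simp add: restr_def fsum_apply)
  qed
qed

lemma Inv_ideal:
  assumes S2: "\<forall>s\<in>S. supp_len s 2" and p: "p \<in> ideal_gen S"
  shows "Inv S p"
  using p
proof (induction p rule: ideal_gen.induct)
  case (gen s)
  then have s2: "supp_len s 2" using S2 by auto
  then have "restr 3 s = 0" by (simp add: restr_supp0)
  then show ?case unfolding Inv_def using s2
    by (auto simp: restr_supp supp_len_def nc.span_zero intro: nc.span_base gen)
next
  case zero
  have "Inv S 0" unfolding Inv_def restr_zero using nc.span_zero by auto
  then show ?case by (simp add: zero_fun_def)
next
  case (add x y)
  then show ?case unfolding Inv_def restr_add by (auto intro: nc.span_add)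
next
  case (scale x s)
  then show ?case unfolding Inv_def restr_scale by (auto intro: nc.span_scale)
next
  case (lmult x t)
  have x01: "\<forall>w. length w \<le> 1 \<longrightarrow> x w = 0" using lmult.IH by (simp add: Inv_def)
  have a: "\<forall>w. length w \<le> 1 \<longrightarrow> ncmult t x w = 0"
  proof (intro allI impI)
    fix w :: "letter list" assume "length w \<le> 1"
    then consider "w = []" | x1 where "w = [x1]" using len_le1 by blast
    then show "ncmult t x w = 0" using x01 by cases (auto simp: ncmult_0 ncmult_1)
  qed
  have b: "restr 2 (ncmult t x) = ncscale (t []) (restr 2 x)"
  proof (rule ext)
    fix w :: "letter list"
    show "restr 2 (ncmult t x) w = ncscale (t []) (restr 2 x) w"
    proof (cases "length w = 2")
      case True
      then obtain x1 x2 where "w = [x1,x2]"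
        using len2 by blast
      then show ?thesis using x01 by (simp add: restr_def ncmult_2)
    qed (simp add: restr_def)
  qed
  have c: "restr 3 (ncmult t x) \<in> nc.span (prods S)"
    unfolding restr3_lmult[OF x01]
    using lmult.IH by (auto simp: Inv_def intro!: nc.span_add nc.span_scale nc.span_sum span_lmult)
  show ?case using a b c lmult.IH by (simp add: Inv_def nc.span_scale)
next
  case (rmult x t)
  have x01: "\<forall>w. length w \<le> 1 \<longrightarrow> x w = 0" using rmult.IH by (simp add: Inv_def)
  have a: "\<forall>w. length w \<le> 1 \<longrightarrow> ncmult x t w = 0"
  proof (intro allI impI)
    fix w :: "letter list" assume "length w \<le> 1"
    then consider "w = []" | x1 where "w = [x1]" using len_le1 by blast
    then show "ncmult x t w = 0" using x01 by cases (auto simp: ncmult_0 ncmult_1)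
  qed
  have b: "restr 2 (ncmult x t) = ncscale (t []) (restr 2 x)"
  proof (rule ext)
    fix w :: "letter list"
    show "restr 2 (ncmult x t) w = ncscale (t []) (restr 2 x) w"
    proof (cases "length w = 2")
      case True
      then obtain x1 x2 where "w = [x1,x2]"
        using len2 by blast
      then show ?thesis using x01 by (simp add: restr_def ncmult_2 mult.commute)
    qed (simp add: restr_def)
  qed
  have c: "restr 3 (ncmult x t) \<in> nc.span (prods S)"
    unfolding restr3_rmult[OF x01]
    using rmult.IH by (auto simp: Inv_def intro!: nc.span_add nc.span_scale nc.span_sum span_rmult)
  show ?case using a b c rmult.IH by (simp add: Inv_def nc.span_scale)
qed


definition bihom :: "ncpoly \<Rightarrow> nat \<Rightarrow> nat \<Rightarrow> bool" where
  "bihom p k l \<longleftrightarrow> (\<forall>w. p w \<noteq> 0 \<longrightarrow> length (filter isV w) = k \<and> length (filter (\<lambda>x. \<not> isV x) w) = l)"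

definition bproj :: "nat \<Rightarrow> nat \<Rightarrow> ncpoly \<Rightarrow> ncpoly" where
  "bproj k l p = (\<lambda>w. if length (filter isV w) = k \<and> length (filter (\<lambda>x. \<not> isV x) w) = l then p w else 0)"

lemma bideg_part_eq: "bideg_part J k l = {p \<in> J. bihom p k l}"
  by (simp add: bideg_part_def bihom_def)

lemma bproj_id: "bihom p k l \<Longrightarrow> bproj k l p = p"
  by (auto simp: bihom_def bproj_def fun_eq_iff)
lemma bproj_0: "bihom p k' l' \<Longrightarrow> (k', l') \<noteq> (k, l) \<Longrightarrow> bproj k l p = 0"
  by (auto simp: bihom_def bproj_def fun_eq_iff)
lemma bihom_supp: "bihom p k l \<Longrightarrow> supp_len p (k + l)"
  by (auto simp: bihom_def supp_len_def sum_length_filter_compl[symmetric])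

lemma bihom_ncmult: assumes "bihom p k1 l1" "bihom g k2 l2" shows "bihom (ncmult p g) (k1 + k2) (l1 + l2)"
  unfolding bihom_def
proof (intro allI impI)
  fix w assume "ncmult p g w \<noteq> 0"
  then obtain n where "n \<in> {..length w}" "p (take n w) * g (drop n w) \<noteq> 0"
    unfolding ncmult_def by (meson sum.neutral)
  then have "p (take n w) \<noteq> 0" "g (drop n w) \<noteq> 0" by auto
  then have h: "length (filter isV (take n w)) = k1" "length (filter (\<lambda>x. \<not> isV x) (take n w)) = l1"
     "length (filter isV (drop n w)) = k2" "length (filter (\<lambda>x. \<not> isV x) (drop n w)) = l2"
    using assms unfolding bihom_def by auto
  have "w = take n w @ drop n w" by simp
  then have "filter isV w = filter isV (take n w) @ filter isV (drop n w)"
    "filter (\<lambda>x. \<not> isV x) w = filter (\<lambda>x. \<not> isV x) (take n w) @ filter (\<lambda>x. \<not> isV x) (drop n w)"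
    by (metis filter_append)+
  then show "length (filter isV w) = k1 + k2 \<and> length (filter (\<lambda>x. \<not> isV x) w) = l1 + l2"
    using h by simp
qed

lemma bihom_lett: "bihom (lett x) (if isV x then 1 else 0) (if isV x then 0 else 1)"
  by (auto simp: bihom_def lett_def)

lemma bproj_add: "bproj k l (x + y) = bproj k l x + bproj k l y"
  by (auto simp: bproj_def fun_eq_iff)
lemma bproj_scale: "bproj k l (ncscale s x) = ncscale s (bproj k l x)"
  by (auto simp: bproj_def fun_eq_iff)
lemma bproj_zero: "bproj k l 0 = 0"
  by (auto simp: bproj_def fun_eq_iff)

lemma span_bproj: assumes "x \<in> nc.span X" shows "bproj k l x \<in> nc.span (bproj k l ` X)"
proof -
  have "nc.subspace {x. bproj k l x \<in> nc.span (bproj k l ` X)}"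
    by (rule nc.subspaceI) (auto simp: bproj_zero bproj_add bproj_scale intro: nc.span_add nc.span_scale nc.span_zero)
  moreover have "X \<subseteq> {x. bproj k l x \<in> nc.span (bproj k l ` X)}"
    by (auto intro!: nc.span_base)
  ultimately show ?thesis using assms nc.span_minimal by blast
qed

lemma bideg_subspace: "nc.subspace (bideg_part (ideal_gen S) k l)"
  unfolding bideg_part_eq
proof (rule nc.subspaceI)
  show "0 \<in> {p \<in> ideal_gen S. bihom p k l}"
    using ideal_gen.zero by (auto simp: bihom_def)
next
  fix x y assume "x \<in> {p \<in> ideal_gen S. bihom p k l}" "y \<in> {p \<in> ideal_gen S. bihom p k l}"
  then show "x + y \<in> {p \<in> ideal_gen S. bihom p k l}"
  proof -
    have "bihom (x + y) k l" unfolding bihom_def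
    proof (intro allI impI)
      fix w assume "(x + y) w \<noteq> 0"
      then have "x w \<noteq> 0 \<or> y w \<noteq> 0" by auto
      then show "length (filter isV w) = k \<and> length (filter (\<lambda>x. \<not> isV x) w) = l"
        using \<open>x \<in> {p \<in> ideal_gen S. bihom p k l}\<close> \<open>y \<in> {p \<in> ideal_gen S. bihom p k l}\<close>
        unfolding bihom_def by blast
    qed
    then show ?thesis using ideal_gen.add[of x S y] \<open>x \<in> {p \<in> ideal_gen S. bihom p k l}\<close> \<open>y \<in> {p \<in> ideal_gen S. bihom p k l}\<close> by simp
  qed
next
  fix c x assume "x \<in> {p \<in> ideal_gen S. bihom p k l}"
  then show "ncscale c x \<in> {p \<in> ideal_gen S. bihom p k l}"
    using ideal_gen.scale[of x S c] by (auto simp: bihom_def)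
qed

theorem struct_span:
  assumes S2: "\<forall>s\<in>S. supp_len s 2" and Sh: "\<forall>s\<in>S. \<exists>k l. bihom s k l" and kl: "k + l = 3"
  shows "nc.span (bideg_part (ideal_gen S) k l) = nc.span (bproj k l ` prods S)"
proof -
  have A: "bideg_part (ideal_gen S) k l \<subseteq> nc.span (bproj k l ` prods S)"
  proof
    fix p assume "p \<in> bideg_part (ideal_gen S) k l"
    then have p: "p \<in> ideal_gen S" "bihom p k l" by (auto simp: bideg_part_eq)
    have "restr 3 p \<in> nc.span (prods S)" using Inv_ideal[OF S2 p(1)] by (simp add: Inv_def)
    moreover have "restr 3 p = p" using bihom_supp[OF p(2)] kl restr_supp by simp
    ultimately have "bproj k l p \<in> nc.span (bproj k l ` prods S)" using span_bproj by metis
    then show "p \<in> nc.span (bproj k l ` prods S)" using bproj_id[OF p(2)] by simp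
  qed
  have B: "bproj k l ` prods S \<subseteq> bideg_part (ideal_gen S) k l"
  proof
    fix r assume "r \<in> bproj k l ` prods S"
    then obtain pr where r: "r = bproj k l pr" and pr: "pr \<in> prods S" by auto
    have "pr \<in> ideal_gen S \<and> (\<exists>k' l'. bihom pr k' l')"
      using pr unfolding prods_def
    proof (elim UnE CollectE exE conjE)
      fix x g assume "pr = ncmult (lett x) g" "g \<in> S"
      then show ?thesis using Sh bihom_ncmult[OF bihom_lett] ideal_gen.lmult[OF ideal_gen.gen lett_tensor]
        by blast
    next
      fix x g assume "pr = ncmult g (lett x)" "g \<in> S"
      then show ?thesis using Sh bihom_ncmult[OF _ bihom_lett] ideal_gen.rmult[OF ideal_gen.gen lett_tensor]
        by blast
    qed
    then obtain k' l' where pr2: "pr \<in> ideal_gen S" "bihom pr k' l'" by blast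
    show "r \<in> bideg_part (ideal_gen S) k l"
    proof (cases "(k', l') = (k, l)")
      case True
      then show ?thesis using pr2 r bproj_id by (auto simp: bideg_part_eq)
    next
      case False
      then have "r = 0" using r bproj_0[OF pr2(2)] by simp
      then show ?thesis using nc.subspace_0[OF bideg_subspace] by simp
    qed
  qed
  show ?thesis unfolding nc.span_eq using A B nc.span_superset by blast
qed

corollary struct_dim:
  assumes "\<forall>s\<in>S. supp_len s 2" "\<forall>s\<in>S. \<exists>k l. bihom s k l" "k + l = 3"
  shows "cdim (bideg_part (ideal_gen S) k l) = nc.dim (bproj k l ` prods S)"
  unfolding cdim_def using nc.span_eq_dim[OF struct_span[OF assms]] by simp


lemma fam_dim:
  fixes F :: "'i \<Rightarrow> ncpoly"
  assumes fin: "finite I"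
    and indep: "\<And>c. (\<Sum>i\<in>I. ncscale (c i) (F i)) = 0 \<Longrightarrow> \<forall>i\<in>I. c i = 0"
    and sp: "nc.span X = nc.span (F ` I)"
  shows "nc.dim X = card I"
proof -
  have inj: "inj_on F I"
  proof (rule inj_onI, rule ccontr)
    fix i j assume ij: "i \<in> I" "j \<in> I" "F i = F j" "i \<noteq> j"
    define c where "c k = (if k = i then 1 else if k = j then -1 else (0::complex))" for k
    have "(\<Sum>k\<in>I. ncscale (c k) (F k)) = (\<Sum>k\<in>{i,j}. ncscale (c k) (F k))"
      by (rule sum.mono_neutral_right) (use fin ij in \<open>auto simp: c_def ncscale_def fun_eq_iff\<close>)
    also have "\<dots> = 0" using ij by (simp add: c_def ncscale_def fun_eq_iff)
    finally have "c i = 0" using indep ij by blast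
    then show False by (simp add: c_def)
  qed
  have ind: "nc.independent (F ` I)"
  proof (rule nc.independent_if_scalars_zero)
    show "finite (F ` I)" using fin by simp
  next
    fix f x assume s: "(\<Sum>x\<in>F ` I. ncscale (f x) x) = 0" and x: "x \<in> F ` I"
    have "(\<Sum>i\<in>I. ncscale (f (F i)) (F i)) = 0" using s by (simp add: sum.reindex[OF inj])
    then have "\<forall>i\<in>I. f (F i) = 0" by (rule indep)
    then show "f x = 0" using x by auto
  qed
  have "nc.dim X = nc.dim (F ` I)" using nc.span_eq_dim[OF sp] .
  also have "\<dots> = card (F ` I)" using nc.dim_eq_card_independent[OF ind] .
  also have "\<dots> = card I" using card_image[OF inj] .
  finally show ?thesis .
qed

definition agen :: "t3 \<Rightarrow> idx \<Rightarrow> ncpoly" where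
  "agen a k = (\<lambda>w. \<Sum>i\<in>UNIV. \<Sum>j\<in>UNIV. if w = [Vl i, Vl j] then a k i j else 0)"
definition bgen :: "t3 \<Rightarrow> idx \<Rightarrow> ncpoly" where
  "bgen b m = (\<lambda>w. \<Sum>i\<in>UNIV. \<Sum>j\<in>UNIV. if w = [Wl i, Wl j] then b m i j else 0)"
definition cgen :: "t2 \<Rightarrow> ncpoly" where
  "cgen c = (\<lambda>w. \<Sum>i\<in>UNIV. \<Sum>j\<in>UNIV. if w = [Vl i, Wl j] then c i j else 0)"
definition rgen :: "complex \<Rightarrow> t3 \<Rightarrow> t3 \<Rightarrow> idx \<Rightarrow> idx \<Rightarrow> ncpoly" where
  "rgen q A a k m = (\<lambda>w. (if w = [Wl k, Vl m] then 1 else 0)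
          + (q + inverse q) * (\<Sum>i\<in>UNIV. \<Sum>l\<in>UNIV. if w = [Vl i, Wl l] then Gmap a A k m i l else 0))"

lemma shape_gens_eq: "shape_gens q A a b c = range (agen a) \<union> range (bgen b) \<union> {cgen c} \<union> {rgen q A a k m | k m. True}"
  unfolding shape_gens_def agen_def bgen_def cgen_def rgen_def by blast


lemmas ev_simps = times_if0 if0_times sum_if_and if_and0

lemma agen_ev[simp]: "agen a k [Vl i, Vl j] = a k i j" "agen a k [Vl i, Wl j] = 0" "agen a k [Wl i, y] = 0"
  "agen a k [] = 0" "agen a k [x] = 0" "agen a k (x1 # x2 # x3 # xs) = 0"
  by (simp_all add: agen_def ev_simps)
lemma bgen_ev[simp]: "bgen b k [Wl i, Wl j] = b k i j" "bgen b k [Wl i, Vl j] = 0" "bgen b k [Vl i, y] = 0"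
  "bgen b k [] = 0" "bgen b k [x] = 0" "bgen b k (x1 # x2 # x3 # xs) = 0"
  by (simp_all add: bgen_def ev_simps)
lemma cgen_ev[simp]: "cgen c [Vl i, Wl j] = c i j" "cgen c [Vl i, Vl j] = 0" "cgen c [Wl i, y] = 0"
  "cgen c [] = 0" "cgen c [x] = 0" "cgen c (x1 # x2 # x3 # xs) = 0"
  by (simp_all add: cgen_def ev_simps)
lemma rgen_ev[simp]: "rgen q A a k m [Vl i, Wl l] = (q + inverse q) * Gmap a A k m i l"
  "rgen q A a k m [Wl i, Vl j] = (if i = k \<and> j = m then 1 else 0)"
  "rgen q A a k m [Vl i, Vl j] = 0" "rgen q A a k m [Wl i, Wl j] = 0"
  "rgen q A a k m [] = 0" "rgen q A a k m [x] = 0" "rgen q A a k m (x1 # x2 # x3 # xs) = 0"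
  by (auto simp: rgen_def ev_simps)


lemma sum_UNIV_plus: "(\<Sum>i\<in>(UNIV::('a::finite + 'b::finite) set). g i) = (\<Sum>x\<in>UNIV. g (Inl x)) + (\<Sum>y\<in>UNIV. g (Inr y))"
  using sum.Plus[of "UNIV::'a set" "UNIV::'b set" g] by (simp add: comp_def)

lemma sum_UNIV_pair: "(\<Sum>p\<in>(UNIV::('a::finite \<times> 'b::finite) set). g p) = (\<Sum>x\<in>UNIV. \<Sum>y\<in>UNIV. g (x, y))"
  using sum.cartesian_product[of "\<lambda>x y. g (x,y)" "UNIV::'b set" "UNIV::'a set"] by simp

lemma card_I17: "card (UNIV :: ((idx \<times> idx) + (idx \<times> idx)) set) = 18"
proof -
  have "card (UNIV :: ((idx \<times> idx) + (idx \<times> idx)) set) = card ((UNIV::(idx \<times> idx) set) <+> (UNIV::(idx \<times> idx) set))"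
    by simp
  also have "\<dots> = 18" by (simp only: card_Plus finite) (simp add: card_cartesian_product[symmetric])
  finally show ?thesis .
qed


lemma alg17:
  fixes e f :: t3 and GG HH :: "idx \<Rightarrow> idx \<Rightarrow> idx \<Rightarrow> idx \<Rightarrow> complex" and p r Lc :: t2 and \<alpha> \<beta> :: t2 and \<rho> :: complex
  assumes einv: "\<And>k m. (\<Sum>x\<in>UNIV. \<Sum>y\<in>UNIV. e k x y * f x y m) = kdelta k m"
    and GGd: "\<And>k z x m. GG k z x m = (\<Sum>y\<in>UNIV. e k x y * f y z m)"
    and HHd: "\<And>x k m z. HH x k m z = (\<Sum>y\<in>UNIV. e k y z * f x y m)"
    and HG: "\<And>k' z' m z. (\<Sum>x\<in>UNIV. \<Sum>k\<in>UNIV. GG k' z' x k * HH x k m z) = \<rho> * (kdelta k' m * kdelta z' z + Lc k' z' * p m z)"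
    and rho1: "\<rho> \<noteq> 1"
    and p0: "p k0 j0 \<noteq> 0" and a0: "\<alpha> k0 j0 = 0"
    and E: "\<And>x y z. (\<Sum>k\<in>UNIV. \<alpha> k z * e k x y) + (\<Sum>k\<in>UNIV. \<beta> x k * e k y z) = 0"
  shows "\<alpha> = (\<lambda>_ _. 0) \<and> \<beta> = (\<lambda>_ _. 0)"
proof -
  have s1: "\<alpha> m z + (\<Sum>x\<in>UNIV. \<Sum>k\<in>UNIV. \<beta> x k * HH x k m z) = 0" for m z
  proof -
    have "0 = (\<Sum>x\<in>UNIV. \<Sum>y\<in>UNIV. ((\<Sum>k\<in>UNIV. \<alpha> k z * e k x y) + (\<Sum>k\<in>UNIV. \<beta> x k * e k y z)) * f x y m)"
      by (simp add: E)
    also have "\<dots> = (\<Sum>k\<in>UNIV. \<alpha> k z * (\<Sum>x\<in>UNIV. \<Sum>y\<in>UNIV. e k x y * f x y m)) + (\<Sum>x\<in>UNIV. \<Sum>k\<in>UNIV. \<beta> x k * (\<Sum>y\<in>UNIV. e k y z * f x y m))"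
      by (simp only: sum_idx) (simp add: algebra_simps)
    also have "\<dots> = \<alpha> m z + (\<Sum>x\<in>UNIV. \<Sum>k\<in>UNIV. \<beta> x k * HH x k m z)"
      by (simp add: einv HHd)
    finally show ?thesis by simp
  qed
  have s2: "(\<Sum>k\<in>UNIV. \<Sum>z\<in>UNIV. \<alpha> k z * GG k z x m) + \<beta> x m = 0" for x m
  proof -
    have "0 = (\<Sum>y\<in>UNIV. \<Sum>z\<in>UNIV. ((\<Sum>k\<in>UNIV. \<alpha> k z * e k x y) + (\<Sum>k\<in>UNIV. \<beta> x k * e k y z)) * f y z m)"
      by (simp add: E)
    also have "\<dots> = (\<Sum>k\<in>UNIV. \<Sum>z\<in>UNIV. \<alpha> k z * (\<Sum>y\<in>UNIV. e k x y * f y z m)) + (\<Sum>k\<in>UNIV. \<beta> x k * (\<Sum>y\<in>UNIV. \<Sum>z\<in>UNIV. e k y z * f y z m))"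
      by (simp only: sum_idx) (simp add: algebra_simps)
    also have "\<dots> = (\<Sum>k\<in>UNIV. \<Sum>z\<in>UNIV. \<alpha> k z * GG k z x m) + \<beta> x m"
      by (simp add: einv GGd)
    finally show ?thesis by simp
  qed
  define l where "l = (\<Sum>k'\<in>UNIV. \<Sum>z'\<in>UNIV. \<alpha> k' z' * Lc k' z')"
  have s3: "\<alpha> m z = \<rho> * (\<alpha> m z + p m z * l)" for m z
  proof -
    have "\<alpha> m z = - (\<Sum>x\<in>UNIV. \<Sum>k\<in>UNIV. \<beta> x k * HH x k m z)"
      using s1[of m z] by (simp add: eq_neg_iff_add_eq_0)
    also have "\<dots> = (\<Sum>x\<in>UNIV. \<Sum>k\<in>UNIV. (\<Sum>k'\<in>UNIV. \<Sum>z'\<in>UNIV. \<alpha> k' z' * GG k' z' x k) * HH x k m z)"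
    proof -
      have "\<beta> x k = - (\<Sum>k'\<in>UNIV. \<Sum>z'\<in>UNIV. \<alpha> k' z' * GG k' z' x k)" for x k
        using s2[of x k] by (simp add: eq_neg_iff_add_eq_0 add.commute)
      then show ?thesis by (simp add: sum_negf)
    qed
    also have "\<dots> = (\<Sum>k'\<in>UNIV. \<Sum>z'\<in>UNIV. \<alpha> k' z' * (\<Sum>x\<in>UNIV. \<Sum>k\<in>UNIV. GG k' z' x k * HH x k m z))"
      by (simp only: sum_idx) (simp add: algebra_simps)
    also have "\<dots> = (\<Sum>k'\<in>UNIV. \<Sum>z'\<in>UNIV. \<alpha> k' z' * (\<rho> * (kdelta k' m * kdelta z' z + Lc k' z' * p m z)))"
      by (simp only: HG)
    also have "\<dots> = \<rho> * ((\<Sum>k'\<in>UNIV. \<Sum>z'\<in>UNIV. \<alpha> k' z' * kdelta k' m * kdelta z' z) + p m z * l)"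
      unfolding l_def by (simp only: sum_idx) (simp add: algebra_simps)
    also have "(\<Sum>k'\<in>UNIV. \<Sum>z'\<in>UNIV. \<alpha> k' z' * kdelta k' m * kdelta z' z) = \<alpha> m z"
      by (simp add: sum_distrib_right[symmetric])
    finally show ?thesis .
  qed
  have s4: "(1 - \<rho>) * \<alpha> m z = \<rho> * l * p m z" for m z
    using s3[of m z] by (simp add: algebra_simps)
  have "\<rho> * l * p k0 j0 = 0" using s4[of k0 j0] a0 by simp
  then have "\<rho> * l = 0" using p0 by simp
  then have "(1 - \<rho>) * \<alpha> m z = 0" for m z using s4[of m z] by simp
  then have az: "\<alpha> m z = 0" for m z using rho1 by simp
  have "\<beta> x m = 0" for x m using s2[of x m] az by simp
  then show ?thesis using az by (simp add: fun_eq_iff)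
qed


lemma supp_len_zero: "supp_len p n \<Longrightarrow> length w \<noteq> n \<Longrightarrow> p w = 0"
  by (auto simp: supp_len_def)

lemma dim17:
  fixes L :: "idx \<Rightarrow> letter" and X Y :: "idx \<Rightarrow> idx \<Rightarrow> ncpoly"
    and e f :: t3 and GG HH :: "idx \<Rightarrow> idx \<Rightarrow> idx \<Rightarrow> idx \<Rightarrow> complex" and p r Lc :: t2 and \<rho> :: complex
  assumes suppX: "\<And>k j. supp_len (X k j) 3" and suppY: "\<And>i k. supp_len (Y i k) 3"
    and evX: "\<And>k j x y z. X k j [L x, L y, L z] = (if z = j then e k x y else 0)"
    and evY: "\<And>i k x y z. Y i k [L x, L y, L z] = (if x = i then e k y z else 0)"
    and van: "\<And>w k j i k'. length w = 3 \<Longrightarrow> (\<forall>x y z. w \<noteq> [L x, L y, L z]) \<Longrightarrow> X k j w = 0 \<and> Y i k' w = 0"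
    and einv: "\<And>k m. (\<Sum>x\<in>UNIV. \<Sum>y\<in>UNIV. e k x y * f x y m) = kdelta k m"
    and GGd: "\<And>k z x m. GG k z x m = (\<Sum>y\<in>UNIV. e k x y * f y z m)"
    and HHd: "\<And>x k m z. HH x k m z = (\<Sum>y\<in>UNIV. e k y z * f x y m)"
    and HG: "\<And>k' z' m z. (\<Sum>x\<in>UNIV. \<Sum>k\<in>UNIV. GG k' z' x k * HH x k m z) = \<rho> * (kdelta k' m * kdelta z' z + Lc k' z' * p m z)"
    and rho1: "\<rho> \<noteq> 1"
    and rel: "\<And>x y z. (\<Sum>k\<in>UNIV. p k z * e k x y) = (\<Sum>k\<in>UNIV. r x k * e k y z)"
    and p0: "p k0 j0 \<noteq> 0"
  shows "nc.dim ({X k j | k j. True} \<union> {Y i k | i k. True}) = 17"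
proof -
  define I where "I = (UNIV :: ((idx \<times> idx) + (idx \<times> idx)) set) - {Inl (k0, j0)}"
  define F where "F = case_sum (case_prod X) (case_prod Y)"
  have cardI: "card I = 17" unfolding I_def using card_I17 by (simp add: card_Diff_singleton)
  have finI: "finite I" by (simp add: I_def)
  have indep: "\<forall>i\<in>I. c i = 0" if cz: "(\<Sum>i\<in>I. ncscale (c i) (F i)) = 0" for c
  proof -
    define c' where "c' i = (if i = Inl (k0, j0) then 0 else c i)" for i
    have "(\<Sum>i\<in>UNIV. ncscale (c' i) (F i)) = ncscale (c' (Inl (k0, j0))) (F (Inl (k0, j0))) + (\<Sum>i\<in>I. ncscale (c' i) (F i))"
      unfolding I_def by (rule sum.remove) auto
    also have "(\<Sum>i\<in>I. ncscale (c' i) (F i)) = (\<Sum>i\<in>I. ncscale (c i) (F i))"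
      by (rule sum.cong) (auto simp: c'_def I_def)
    finally have cz': "(\<Sum>i\<in>UNIV. ncscale (c' i) (F i)) = 0" using cz by (simp add: c'_def ncscale_def zero_fun_def)
    define \<alpha> where "\<alpha> k j = c' (Inl (k, j))" for k j
    define \<beta> where "\<beta> i k = c' (Inr (i, k))" for i k
    have E: "(\<Sum>k\<in>UNIV. \<alpha> k z * e k x y) + (\<Sum>k\<in>UNIV. \<beta> x k * e k y z) = 0" for x y z
    proof -
      have "0 = (\<Sum>i\<in>UNIV. ncscale (c' i) (F i)) [L x, L y, L z]" using cz' by simp
      also have "\<dots> = (\<Sum>k\<in>UNIV. \<Sum>j\<in>UNIV. \<alpha> k j * (if z = j then e k x y else 0)) + (\<Sum>i\<in>UNIV. \<Sum>k\<in>UNIV. \<beta> i k * (if x = i then e k y z else 0))"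
        unfolding fsum_apply sum_UNIV_plus sum_UNIV_pair by (simp add: F_def evX evY \<alpha>_def \<beta>_def)
      also have "\<dots> = (\<Sum>k\<in>UNIV. \<alpha> k z * e k x y) + (\<Sum>k\<in>UNIV. \<beta> x k * e k y z)"
        by (simp add: ev_simps)
      finally show ?thesis by simp
    qed
    have a0: "\<alpha> k0 j0 = 0" by (simp add: \<alpha>_def c'_def)
    have "\<alpha> = (\<lambda>_ _. 0) \<and> \<beta> = (\<lambda>_ _. 0)"
      by (rule alg17[OF einv GGd HHd HG rho1 p0 a0 E])
    then have c'0: "c' i = 0" for i
      by (cases i) (auto simp: \<alpha>_def \<beta>_def fun_eq_iff)
    show ?thesis
    proof
      fix i assume "i \<in> I"
      then have "i \<noteq> Inl (k0, j0)" by (simp add: I_def)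
      then show "c i = 0" using c'0[of i] by (simp add: c'_def)
    qed
  qed
  define S where "S = {X k j | k j. True} \<union> {Y i k | i k. True}"
  have relV: "(\<Sum>k\<in>UNIV. \<Sum>j\<in>UNIV. ncscale (p k j) (X k j)) = (\<Sum>i\<in>UNIV. \<Sum>k\<in>UNIV. ncscale (r i k) (Y i k))"
  proof (rule ext)
    fix w :: "letter list"
    show "(\<Sum>k\<in>UNIV. \<Sum>j\<in>UNIV. ncscale (p k j) (X k j)) w = (\<Sum>i\<in>UNIV. \<Sum>k\<in>UNIV. ncscale (r i k) (Y i k)) w"
    proof (cases "length w = 3")
      case True
      show ?thesis
      proof (cases "\<exists>x y z. w = [L x, L y, L z]")
        case True
        then obtain x y z where w: "w = [L x, L y, L z]" by blast
        have "(\<Sum>k\<in>UNIV. \<Sum>j\<in>UNIV. ncscale (p k j) (X k j)) w = (\<Sum>k\<in>UNIV. p k z * e k x y)"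
          unfolding fsum_apply w by (simp add: evX ev_simps)
        moreover have "(\<Sum>i\<in>UNIV. \<Sum>k\<in>UNIV. ncscale (r i k) (Y i k)) w = (\<Sum>k\<in>UNIV. r x k * e k y z)"
          unfolding fsum_apply w by (simp add: evY ev_simps)
        ultimately show ?thesis using rel by simp
      next
        case False
        then show ?thesis using van[OF \<open>length w = 3\<close>] unfolding fsum_apply by simp
      qed
    next
      case False
      then show ?thesis using supp_len_zero[OF suppX] supp_len_zero[OF suppY] unfolding fsum_apply by simp
    qed
  qed
  have FI: "F ` I \<subseteq> S"
  proof
    fix v assume "v \<in> F ` I"
    then obtain i where "v = F i" by blast
    then show "v \<in> S" unfolding S_def F_def by (cases i) auto
  qed
  have SF: "S \<subseteq> nc.span (F ` I)"
  proof
    fix v assume "v \<in> S"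
    then consider k j where "v = X k j" | i k where "v = Y i k" unfolding S_def by blast
    then show "v \<in> nc.span (F ` I)"
    proof cases
      case (2 i k)
      then have "v = F (Inr (i, k))" by (simp add: F_def)
      then show ?thesis by (auto simp: I_def intro!: nc.span_base)
    next
      case (1 k j)
      show ?thesis
      proof (cases "(k, j) = (k0, j0)")
        case False
        then have "v = F (Inl (k, j))" "Inl (k, j) \<in> I" using 1 by (auto simp: F_def I_def)
        then show ?thesis by (auto intro!: nc.span_base)
      next
        case True
        have Yin: "(\<Sum>i\<in>UNIV. \<Sum>k\<in>UNIV. ncscale (r i k) (Y i k)) \<in> nc.span (F ` I)"
        proof (intro nc.span_sum nc.span_scale nc.span_base)
          fix i k
          have "Y i k = F (Inr (i, k))" "Inr (i, k) \<in> I" by (auto simp: F_def I_def)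
          then show "Y i k \<in> F ` I" by blast
        qed
        have Xin: "(\<Sum>q\<in>UNIV - {(k0, j0)}. ncscale (p (fst q) (snd q)) (X (fst q) (snd q))) \<in> nc.span (F ` I)"
        proof (intro nc.span_sum nc.span_scale nc.span_base)
          fix q assume "q \<in> UNIV - {(k0, j0)}"
          then show "X (fst q) (snd q) \<in> F ` I"
            by (auto simp: F_def I_def image_iff split: prod.split intro!: bexI[of _ "Inl q"])
        qed
        have "(\<Sum>k\<in>UNIV. \<Sum>j\<in>UNIV. ncscale (p k j) (X k j)) = (\<Sum>q\<in>UNIV. ncscale (p (fst q) (snd q)) (X (fst q) (snd q)))"
          by (simp add: sum_UNIV_pair)
        also have "\<dots> = ncscale (p k0 j0) (X k0 j0) + (\<Sum>q\<in>UNIV - {(k0, j0)}. ncscale (p (fst q) (snd q)) (X (fst q) (snd q)))"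
          by (subst sum.remove[of UNIV "(k0, j0)"]) auto
        finally have "ncscale (p k0 j0) (X k0 j0) = (\<Sum>i\<in>UNIV. \<Sum>k\<in>UNIV. ncscale (r i k) (Y i k)) - (\<Sum>q\<in>UNIV - {(k0, j0)}. ncscale (p (fst q) (snd q)) (X (fst q) (snd q)))"
          using relV by (simp add: algebra_simps)
        then have "ncscale (p k0 j0) (X k0 j0) \<in> nc.span (F ` I)" using Yin Xin nc.span_diff by simp
        then have "ncscale (inverse (p k0 j0)) (ncscale (p k0 j0) (X k0 j0)) \<in> nc.span (F ` I)"
          by (rule nc.span_scale)
        moreover have "ncscale (inverse (p k0 j0)) (ncscale (p k0 j0) (X k0 j0)) = v"
          using 1 True p0 by (simp add: ncscale_def fun_eq_iff)
        ultimately show ?thesis by simp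
      qed
    qed
  qed
  have "nc.span S = nc.span (F ` I)"
    unfolding nc.span_eq using FI SF nc.span_superset by blast
  from fam_dim[OF finI indep this] cardI show ?thesis unfolding S_def by simp
qed


lemma agen_nz: "agen a k w \<noteq> 0 \<Longrightarrow> \<exists>i j. w = [Vl i, Vl j]"
  by (rule ccontr) (simp add: agen_def)
lemma bgen_nz: "bgen b k w \<noteq> 0 \<Longrightarrow> \<exists>i j. w = [Wl i, Wl j]"
  by (rule ccontr) (simp add: bgen_def)
lemma cgen_nz: "cgen c w \<noteq> 0 \<Longrightarrow> \<exists>i j. w = [Vl i, Wl j]"
  by (rule ccontr) (simp add: cgen_def)
lemma rgen_nz: "rgen q A a k m w \<noteq> 0 \<Longrightarrow> w = [Wl k, Vl m] \<or> (\<exists>i j. w = [Vl i, Wl j])"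
  by (rule ccontr) (simp add: rgen_def)

lemma bihom_agen: "bihom (agen a k) 2 0"
  unfolding bihom_def using agen_nz by fastforce
lemma bihom_bgen: "bihom (bgen b k) 0 2"
  unfolding bihom_def using bgen_nz by fastforce
lemma bihom_cgen: "bihom (cgen c) 1 1"
  unfolding bihom_def using cgen_nz by fastforce
lemma bihom_rgen: "bihom (rgen q A a k m) 1 1"
  unfolding bihom_def using rgen_nz by fastforce

definition Gs :: "complex \<Rightarrow> t3 \<Rightarrow> t3 \<Rightarrow> t3 \<Rightarrow> t2 \<Rightarrow> ncpoly set" where
  "Gs q A a b c = range (agen a) \<union> range (bgen b) \<union> {cgen c} \<union> {rgen q A a k m | k m. True}"

lemma Gs_bihom: "g \<in> Gs q A a b c \<Longrightarrow> \<exists>k l. bihom g k l \<and> k + l = 2"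
  unfolding Gs_def using bihom_agen bihom_bgen bihom_cgen bihom_rgen by fastforce

lemma Gs_supp: "\<forall>s\<in>Gs q A a b c. supp_len s 2"
  using Gs_bihom bihom_supp by fastforce

lemma bihom_lV: "bihom g k l \<Longrightarrow> bihom (ncmult (lett (Vl i)) g) (Suc k) l"
  using bihom_ncmult[OF bihom_lett[of "Vl i"]] by simp
lemma bihom_lW: "bihom g k l \<Longrightarrow> bihom (ncmult (lett (Wl i)) g) k (Suc l)"
  using bihom_ncmult[OF bihom_lett[of "Wl i"]] by simp
lemma bihom_rV: "bihom g k l \<Longrightarrow> bihom (ncmult g (lett (Vl i))) (Suc k) l"
  using bihom_ncmult[OF _ bihom_lett[of "Vl i"]] by simp
lemma bihom_rW: "bihom g k l \<Longrightarrow> bihom (ncmult g (lett (Wl i))) k (Suc l)"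
  using bihom_ncmult[OF _ bihom_lett[of "Wl i"]] by simp

lemma span_bproj_prods:
  assumes cls: "\<And>v. v \<in> prods G \<Longrightarrow> (\<exists>k' l'. bihom v k' l' \<and> ((k', l') = (k, l) \<longrightarrow> v \<in> T))"
    and T: "\<And>v. v \<in> T \<Longrightarrow> v \<in> prods G \<and> bihom v k l"
  shows "nc.span (bproj k l ` prods G) = nc.span T"
proof -
  have "bproj k l ` prods G \<subseteq> nc.span T"
  proof
    fix u assume "u \<in> bproj k l ` prods G"
    then obtain v where u: "u = bproj k l v" and v: "v \<in> prods G" by auto
    obtain k' l' where kl: "bihom v k' l'" "(k', l') = (k, l) \<longrightarrow> v \<in> T" using cls[OF v] by blast
    show "u \<in> nc.span T"
    proof (cases "(k', l') = (k, l)")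
      case True
      then show ?thesis using kl u bproj_id nc.span_base by auto
    next
      case False
      then show ?thesis using u bproj_0[OF kl(1)] nc.span_zero by simp
    qed
  qed
  moreover have "T \<subseteq> bproj k l ` prods G"
  proof
    fix v assume "v \<in> T"
    then show "v \<in> bproj k l ` prods G" using T bproj_id by (metis image_eqI)
  qed
  ultimately show ?thesis unfolding nc.span_eq using nc.span_superset by blast
qed

lemma prods_Gs_cases:
  assumes "v \<in> prods (Gs q A a b c)"
  obtains
    (LVa) i k where "v = ncmult (lett (Vl i)) (agen a k)"
  | (LWa) i k where "v = ncmult (lett (Wl i)) (agen a k)"
  | (LVb) i k where "v = ncmult (lett (Vl i)) (bgen b k)"
  | (LWb) i k where "v = ncmult (lett (Wl i)) (bgen b k)"
  | (LVc) i where "v = ncmult (lett (Vl i)) (cgen c)"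
  | (LWc) i where "v = ncmult (lett (Wl i)) (cgen c)"
  | (LVr) i k m where "v = ncmult (lett (Vl i)) (rgen q A a k m)"
  | (LWr) i k m where "v = ncmult (lett (Wl i)) (rgen q A a k m)"
  | (RaV) i k where "v = ncmult (agen a k) (lett (Vl i))"
  | (RaW) i k where "v = ncmult (agen a k) (lett (Wl i))"
  | (RbV) i k where "v = ncmult (bgen b k) (lett (Vl i))"
  | (RbW) i k where "v = ncmult (bgen b k) (lett (Wl i))"
  | (RcV) i where "v = ncmult (cgen c) (lett (Vl i))"
  | (RcW) i where "v = ncmult (cgen c) (lett (Wl i))"
  | (RrV) i k m where "v = ncmult (rgen q A a k m) (lett (Vl i))"
  | (RrW) i k m where "v = ncmult (rgen q A a k m) (lett (Wl i))"
proof -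
  from assms obtain x g where g: "g \<in> Gs q A a b c" and v: "v = ncmult (lett x) g \<or> v = ncmult g (lett x)"
    unfolding prods_def by blast
  from g consider k where "g = agen a k" | k where "g = bgen b k" | "g = cgen c" | k m where "g = rgen q A a k m"
    unfolding Gs_def by blast
  then show ?thesis
  proof cases
    case (1 k)
    then show ?thesis using v that by (cases x) auto
  next
    case (2 k)
    then show ?thesis using v that by (cases x) auto
  next
    case 3
    then show ?thesis using v that by (cases x) auto
  next
    case (4 k m)
    then show ?thesis using v that by (cases x) auto
  qed
qed


lemma supp3_l: "bihom g k l \<Longrightarrow> k + l = 2 \<Longrightarrow> supp_len (ncmult (lett x) g) 3"
  by (rule supp_len_ncmult'[OF supp_len_lett]) (auto dest: bihom_supp)
lemma supp3_r: "bihom g k l \<Longrightarrow> k + l = 2 \<Longrightarrow> supp_len (ncmult g (lett x)) 3"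
  by (rule supp_len_ncmult'[OF _ supp_len_lett]) (auto dest: bihom_supp)

lemma cdim_Gs:
  assumes "k + l = 3" "\<And>v. v \<in> prods (Gs q A a b c) \<Longrightarrow> (\<exists>k' l'. bihom v k' l' \<and> ((k', l') = (k, l) \<longrightarrow> v \<in> T))"
    "\<And>v. v \<in> T \<Longrightarrow> v \<in> prods (Gs q A a b c) \<and> bihom v k l"
  shows "cdim (bideg_part (shape_ideal q A a b c) k l) = nc.dim T"
proof -
  have "shape_ideal q A a b c = ideal_gen (Gs q A a b c)"
    unfolding shape_ideal_def shape_gens_eq Gs_def ..
  then have "cdim (bideg_part (shape_ideal q A a b c) k l) = nc.dim (bproj k l ` prods (Gs q A a b c))"
    using struct_dim[OF Gs_supp _ assms(1)] Gs_bihom by metis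
  also have "\<dots> = nc.dim T" using nc.span_eq_dim[OF span_bproj_prods[OF assms(2,3)]] .
  finally show ?thesis .
qed

lemma cls_helper: "bihom v k' l' \<Longrightarrow> ((k', l') = (k, l) \<longrightarrow> v \<in> T) \<Longrightarrow> \<exists>k' l'. bihom v k' l' \<and> ((k', l') = (k, l) \<longrightarrow> v \<in> T)"
  by blast

lemma bh_prods:
  "bihom (ncmult (lett (Vl i)) (agen a k)) 3 0"
  "bihom (ncmult (lett (Wl i)) (agen a k)) 2 1"
  "bihom (ncmult (lett (Vl i)) (bgen b k)) 1 2"
  "bihom (ncmult (lett (Wl i)) (bgen b k)) 0 3"
  "bihom (ncmult (lett (Vl i)) (cgen c)) 2 1"
  "bihom (ncmult (lett (Wl i)) (cgen c)) 1 2"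
  "bihom (ncmult (lett (Vl i)) (rgen q A a k m)) 2 1"
  "bihom (ncmult (lett (Wl i)) (rgen q A a k m)) 1 2"
  "bihom (ncmult (agen a k) (lett (Vl i))) 3 0"
  "bihom (ncmult (agen a k) (lett (Wl i))) 2 1"
  "bihom (ncmult (bgen b k) (lett (Vl i))) 1 2"
  "bihom (ncmult (bgen b k) (lett (Wl i))) 0 3"
  "bihom (ncmult (cgen c) (lett (Vl i))) 2 1"
  "bihom (ncmult (cgen c) (lett (Wl i))) 1 2"
  "bihom (ncmult (rgen q A a k m) (lett (Vl i))) 2 1"
  "bihom (ncmult (rgen q A a k m) (lett (Wl i))) 1 2"
  using bihom_lV[OF bihom_agen] bihom_lW[OF bihom_agen] bihom_lV[OF bihom_bgen] bihom_lW[OF bihom_bgen]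
    bihom_lV[OF bihom_cgen] bihom_lW[OF bihom_cgen] bihom_lV[OF bihom_rgen] bihom_lW[OF bihom_rgen]
    bihom_rV[OF bihom_agen] bihom_rW[OF bihom_agen] bihom_rV[OF bihom_bgen] bihom_rW[OF bihom_bgen]
    bihom_rV[OF bihom_cgen] bihom_rW[OF bihom_cgen] bihom_rV[OF bihom_rgen] bihom_rW[OF bihom_rgen]
  by (simp_all add: numeral_3_eq_3 numeral_2_eq_2)

lemma prods_in: "g \<in> Gs q A a b c \<Longrightarrow> ncmult (lett x) g \<in> prods (Gs q A a b c)"
  "g \<in> Gs q A a b c \<Longrightarrow> ncmult g (lett x) \<in> prods (Gs q A a b c)"
  by (auto simp: prods_def)

lemma Gs_in: "agen a k \<in> Gs q A a b c" "bgen b k \<in> Gs q A a b c" "cgen c \<in> Gs q A a b c" "rgen q A a k m \<in> Gs q A a b c"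
  by (auto simp: Gs_def)


lemma cls30: "v \<in> prods (Gs q A a b c) \<Longrightarrow> \<exists>k' l'. bihom v k' l' \<and> ((k', l') = (3, 0) \<longrightarrow> v \<in> {ncmult (agen a k) (lett (Vl j)) | k j. True} \<union> {ncmult (lett (Vl i)) (agen a k) | i k. True})"
  apply (erule prods_Gs_cases; simp only:; (rule cls_helper, rule bh_prods))
  apply auto
  done

lemma cls03: "v \<in> prods (Gs q A a b c) \<Longrightarrow> \<exists>k' l'. bihom v k' l' \<and> ((k', l') = (0, 3) \<longrightarrow> v \<in> {ncmult (bgen b k) (lett (Wl j)) | k j. True} \<union> {ncmult (lett (Wl i)) (bgen b k) | i k. True})"
  apply (erule prods_Gs_cases; simp only:; (rule cls_helper, rule bh_prods))
  apply auto
  done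

context bqd begin

lemma sumsum_nz: "(\<Sum>i\<in>UNIV. \<Sum>j\<in>UNIV. (f i j :: complex)) \<noteq> 0 \<Longrightarrow> \<exists>i j. f i j \<noteq> 0"
  by (meson sum.neutral)

lemma d_nz: "\<exists>k j. d k j \<noteq> 0"
  using sumsum_nz[of "\<lambda>i j. d i j * C i j"] ax(14) kappa_nz by fastforce
lemma c_nz: "\<exists>k j. c k j \<noteq> 0"
  using sumsum_nz[of "\<lambda>i j. c i j * D i j"] ax(13) kappa_nz by fastforce

lemma omega3: "\<omega> * \<omega>^2 = 1" using ax(3) by (simp add: power2_eq_square power3_eq_cube mult.assoc)

lemma dim30: "cdim (bideg_part (shape_ideal q A a b c) 3 0) = 17"
proof -
  define T where "T = {ncmult (agen a k) (lett (Vl j)) | k j. True} \<union> {ncmult (lett (Vl i)) (agen a k) | i k. True}"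
  have "cdim (bideg_part (shape_ideal q A a b c) 3 0) = nc.dim T"
  proof (rule cdim_Gs)
    fix v assume "v \<in> prods (Gs q A a b c)"
    then show "\<exists>k' l'. bihom v k' l' \<and> ((k', l') = (3, 0) \<longrightarrow> v \<in> T)"
      unfolding T_def by (rule cls30)
  next
    fix v assume "v \<in> T"
    then show "v \<in> prods (Gs q A a b c) \<and> bihom v 3 0"
      unfolding T_def by (auto intro: prods_in Gs_in bh_prods)
  qed simp
  also have "nc.dim T = 17"
  proof -
    obtain k0 j0 where p0: "d k0 j0 \<noteq> 0" using d_nz by blast
    show ?thesis unfolding T_def
    proof (rule dim17[where L = Vl and e = a and f = A and GG = "Gmap a A" and HH = "Hmap a A" and \<rho> = \<rho>
          and Lc = C and p = d and r = "\<lambda>x k. inverse \<omega> * c x k", OF _ _ _ _ _ ax(6) _ _ ax(16) rho_n1 _ p0])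
      show "supp_len (ncmult (agen a k) (lett (Vl j))) 3" for k j using supp3_r[OF bihom_agen] by simp
      show "supp_len (ncmult (lett (Vl i)) (agen a k)) 3" for i k using supp3_l[OF bihom_agen] by simp
      show "ncmult (agen a k) (lett (Vl j)) [Vl x, Vl y, Vl z] = (if z = j then a k x y else 0)" for k j x y z
        by (simp add: ncmult_3)
      show "ncmult (lett (Vl i)) (agen a k) [Vl x, Vl y, Vl z] = (if x = i then a k y z else 0)" for i k x y z
        by (simp add: ncmult_3)
      show "ncmult (agen a k) (lett (Vl j)) w = 0 \<and> ncmult (lett (Vl i)) (agen a k') w = 0"
        if len: "length w = 3" and nv: "\<forall>x y z. w \<noteq> [Vl x, Vl y, Vl z]" for w k j i k'
      proof -
        obtain l1 l2 l3 where w: "w = [l1, l2, l3]" using len3[OF len] by blast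
        show ?thesis using nv unfolding w
          by (cases l1; cases l2; cases l3) (auto simp: ncmult_3)
      qed
      show "Gmap a A k z x m = (\<Sum>y\<in>UNIV. a k x y * A y z m)" for k z x m by (simp add: Gmap_def)
      show "Hmap a A x k m z = (\<Sum>y\<in>UNIV. a k y z * A x y m)" for x k m z by (simp add: Hmap_def mult.commute)
      show "(\<Sum>k\<in>UNIV. d k z * a k x y) = (\<Sum>k\<in>UNIV. inverse \<omega> * c x k * a k y z)" for x y z
        by (simp add: da sum_distrib_left mult.assoc)
    qed
  qed
  finally show ?thesis .
qed

lemma dim03: "cdim (bideg_part (shape_ideal q A a b c) 0 3) = 17"
proof -
  define T where "T = {ncmult (bgen b k) (lett (Wl j)) | k j. True} \<union> {ncmult (lett (Wl i)) (bgen b k) | i k. True}"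
  have "cdim (bideg_part (shape_ideal q A a b c) 0 3) = nc.dim T"
  proof (rule cdim_Gs)
    fix v assume "v \<in> prods (Gs q A a b c)"
    then show "\<exists>k' l'. bihom v k' l' \<and> ((k', l') = (0, 3) \<longrightarrow> v \<in> T)"
      unfolding T_def by (rule cls03)
  next
    fix v assume "v \<in> T"
    then show "v \<in> prods (Gs q A a b c) \<and> bihom v 0 3"
      unfolding T_def by (auto intro: prods_in Gs_in bh_prods)
  qed simp
  also have "nc.dim T = 17"
  proof -
    obtain k0 j0 where p0: "c k0 j0 \<noteq> 0" using c_nz by blast
    have HG: "(\<Sum>x\<in>UNIV. \<Sum>k\<in>UNIV. (\<omega> * Hmap a A k' z' x k) * (\<omega>^2 * Gmap a A x k m z)) = \<rho> * (kdelta k' m * kdelta z' z + D k' z' * c m z)" for k' z' m z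
    proof -
      have "(\<Sum>x\<in>UNIV. \<Sum>k\<in>UNIV. (\<omega> * Hmap a A k' z' x k) * (\<omega>^2 * Gmap a A x k m z)) = (\<omega> * \<omega>^2) * (\<Sum>x\<in>UNIV. \<Sum>k\<in>UNIV. Hmap a A k' z' x k * Gmap a A x k m z)"
        by (simp add: sum_distrib_left mult_ac)
      then show ?thesis using omega3 ax(15) by simp
    qed
    show ?thesis unfolding T_def
    proof (rule dim17[where L = Wl and e = b and f = B and GG = "\<lambda>k z x m. \<omega> * Hmap a A k z x m" and HH = "\<lambda>x k m z. \<omega>^2 * Gmap a A x k m z" and \<rho> = \<rho>
          and Lc = D and p = c and r = "\<lambda>x k. \<omega>^2 * d x k", OF _ _ _ _ _ Bb _ _ HG rho_n1 _ p0])
      show "supp_len (ncmult (bgen b k) (lett (Wl j))) 3" for k j using supp3_r[OF bihom_bgen] by simp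
      show "supp_len (ncmult (lett (Wl i)) (bgen b k)) 3" for i k using supp3_l[OF bihom_bgen] by simp
      show "ncmult (bgen b k) (lett (Wl j)) [Wl x, Wl y, Wl z] = (if z = j then b k x y else 0)" for k j x y z
        by (simp add: ncmult_3)
      show "ncmult (lett (Wl i)) (bgen b k) [Wl x, Wl y, Wl z] = (if x = i then b k y z else 0)" for i k x y z
        by (simp add: ncmult_3)
      show "ncmult (bgen b k) (lett (Wl j)) w = 0 \<and> ncmult (lett (Wl i)) (bgen b k') w = 0"
        if len: "length w = 3" and nv: "\<forall>x y z. w \<noteq> [Wl x, Wl y, Wl z]" for w k j i k'
      proof -
        obtain l1 l2 l3 where w: "w = [l1, l2, l3]" using len3[OF len] by blast
        show ?thesis using nv unfolding w
          by (cases l1; cases l2; cases l3) (auto simp: ncmult_3)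
      qed
      show "\<omega> * Hmap a A k z x m = (\<Sum>y\<in>UNIV. b k x y * B y z m)" for k z x m by (simp add: I6)
      show "\<omega>^2 * Gmap a A x k m z = (\<Sum>y\<in>UNIV. b k y z * B x y m)" for x k m z by (simp add: I7)
      show "(\<Sum>k\<in>UNIV. c k z * b k x y) = (\<Sum>k\<in>UNIV. \<omega>^2 * d x k * b k y z)" for x y z
        by (simp add: Rb sum_distrib_left mult.assoc)
    qed
  qed
  finally show ?thesis .
qed

end


lemma eq3I:
  assumes "\<And>l1 l2 l3. P [l1, l2, l3] = Q [l1, l2, l3]" "supp_len P 3" "supp_len Q 3"
  shows "P = Q"
proof (rule ext)
  fix w :: "letter list"
  show "P w = Q w"
  proof (cases "length w = 3")
    case True
    then obtain l1 l2 l3 where "w = [l1, l2, l3]" using len3 by blast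
    then show ?thesis using assms(1) by simp
  next
    case False
    then show ?thesis using assms(2,3) unfolding supp_len_def by metis
  qed
qed

lemma supp_len_sum: assumes "\<And>i. i \<in> I \<Longrightarrow> supp_len (f i) n" shows "supp_len (\<Sum>i\<in>I. f i) n"
  unfolding supp_len_def
proof (intro allI impI, rule ccontr)
  fix w assume "(\<Sum>i\<in>I. f i) w \<noteq> 0" "length w \<noteq> n"
  then have "f i w = 0" if "i \<in> I" for i using assms that unfolding supp_len_def by metis
  then have "(\<Sum>i\<in>I. f i) w = 0" unfolding fsum_apply by simp
  then show False using \<open>(\<Sum>i\<in>I. f i) w \<noteq> 0\<close> by simp
qed
lemma supp_len_scale: "supp_len p n \<Longrightarrow> supp_len (ncscale s p) n"
  by (auto simp: supp_len_def)
lemma supp_len_plus: "supp_len p n \<Longrightarrow> supp_len r n \<Longrightarrow> supp_len (p + r) n"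
  unfolding supp_len_def by (metis add.right_neutral plus_fun_apply)

lemma supp_len_uminus: "supp_len p n \<Longrightarrow> supp_len (- p) n"
  by (auto simp: supp_len_def)

lemma supp_gens: "supp_len (ncmult (lett x) (agen a k)) 3" "supp_len (ncmult (agen a k) (lett x)) 3"
  "supp_len (ncmult (lett x) (bgen b k)) 3" "supp_len (ncmult (bgen b k) (lett x)) 3"
  "supp_len (ncmult (lett x) (cgen c)) 3" "supp_len (ncmult (cgen c) (lett x)) 3"
  "supp_len (ncmult (lett x) (rgen q A a k m)) 3" "supp_len (ncmult (rgen q A a k m) (lett x)) 3"
  by (auto intro: supp3_l supp3_r bihom_agen bihom_bgen bihom_cgen bihom_rgen)

lemma cls21: "v \<in> prods (Gs q A a b c) \<Longrightarrow> \<exists>k' l'. bihom v k' l' \<and> ((k', l') = (2, 1) \<longrightarrow> v \<in>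
   {ncmult (rgen q A a k m) (lett (Vl j)) | k m j. True} \<union> {ncmult (lett (Vl i)) (rgen q A a k m) | i k m. True}
   \<union> {ncmult (agen a k) (lett (Wl j)) | k j. True} \<union> {ncmult (lett (Vl i)) (cgen c) | i. True}
   \<union> {ncmult (lett (Wl j)) (agen a k) | j k. True} \<union> {ncmult (cgen c) (lett (Vl j)) | j. True})"
  apply (erule prods_Gs_cases; simp only:; (rule cls_helper, rule bh_prods))
  apply ((simp; fail) | (rule impI, blast))+
  done

lemma cls12: "v \<in> prods (Gs q A a b c) \<Longrightarrow> \<exists>k' l'. bihom v k' l' \<and> ((k', l') = (1, 2) \<longrightarrow> v \<in>
   {ncmult (rgen q A a k m) (lett (Wl j)) | k m j. True} \<union> {ncmult (lett (Wl j)) (rgen q A a k m) | j k m. True}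
   \<union> {ncmult (lett (Vl i)) (bgen b m) | i m. True} \<union> {ncmult (cgen c) (lett (Wl j)) | j. True}
   \<union> {ncmult (bgen b m) (lett (Vl j)) | m j. True} \<union> {ncmult (lett (Wl j)) (cgen c) | j. True})"
  apply (erule prods_Gs_cases; simp only:; (rule cls_helper, rule bh_prods))
  apply ((simp; fail) | (rule impI, blast))+
  done

lemma card66: "card (UNIV :: (((idx \<times> idx \<times> idx) + (idx \<times> idx \<times> idx)) + ((idx \<times> idx) + idx)) set) = 66"
proof -
  have "card (UNIV :: (((idx \<times> idx \<times> idx) + (idx \<times> idx \<times> idx)) + ((idx \<times> idx) + idx)) set)
    = card (((UNIV::(idx \<times> idx \<times> idx) set) <+> (UNIV::(idx \<times> idx \<times> idx) set)) <+> ((UNIV::(idx \<times> idx) set) <+> (UNIV::idx set)))"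
    by simp
  also have "\<dots> = 66" by (simp only: card_Plus finite finite_Plus) (simp add: card_cartesian_product[symmetric])
  finally show ?thesis .
qed

lemma neg_if0: "- (if P then x else 0) = (if P then - x else (0::complex))" by simp
lemmas ev2_simps = ev_simps neg_if0

context bqd begin

lemma alg21:
  assumes E: "\<And>x y z. (\<Sum>k\<in>UNIV. \<gamma> k z * a k x y) + \<delta> x * c y z = 0"
  shows "\<gamma> = (\<lambda>_ _. 0) \<and> \<delta> = (\<lambda>_. 0)"
proof -
  have s1: "\<gamma> m z + (\<Sum>x\<in>UNIV. \<delta> x * b x m z) = 0" for m z
  proof -
    have "0 = (\<Sum>x\<in>UNIV. \<Sum>y\<in>UNIV. ((\<Sum>k\<in>UNIV. \<gamma> k z * a k x y) + \<delta> x * c y z) * A x y m)"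
      by (simp add: E)
    also have "\<dots> = (\<Sum>k\<in>UNIV. \<gamma> k z * (\<Sum>x\<in>UNIV. \<Sum>y\<in>UNIV. a k x y * A x y m)) + (\<Sum>x\<in>UNIV. \<delta> x * (\<Sum>y\<in>UNIV. c y z * A x y m))"
      by (simp only: sum_idx) (simp add: algebra_simps)
    also have "\<dots> = \<gamma> m z + (\<Sum>x\<in>UNIV. \<delta> x * b x m z)"
      by (simp add: ax(6) ax(12))
    finally show ?thesis by simp
  qed
  have s2: "(\<Sum>k\<in>UNIV. \<Sum>z\<in>UNIV. \<gamma> k z * B k z x) + \<kappa> * \<delta> x = 0" for x
  proof -
    have "0 = (\<Sum>y\<in>UNIV. \<Sum>z\<in>UNIV. ((\<Sum>k\<in>UNIV. \<gamma> k z * a k x y) + \<delta> x * c y z) * D y z)"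
      by (simp add: E)
    also have "\<dots> = (\<Sum>k\<in>UNIV. \<Sum>z\<in>UNIV. \<gamma> k z * (\<Sum>y\<in>UNIV. a k x y * D y z)) + \<delta> x * (\<Sum>y\<in>UNIV. \<Sum>z\<in>UNIV. c y z * D y z)"
      by (simp only: sum_idx) (simp add: algebra_simps)
    also have "\<dots> = (\<Sum>k\<in>UNIV. \<Sum>z\<in>UNIV. \<gamma> k z * B k z x) + \<kappa> * \<delta> x"
      by (simp add: ax(9) ax(13))
    finally show ?thesis by simp
  qed
  have g: "\<gamma> k z = - (\<Sum>x\<in>UNIV. \<delta> x * b x k z)" for k z
    using s1[of k z] by (simp add: eq_neg_iff_add_eq_0)
  have s3: "(\<Sum>k\<in>UNIV. \<Sum>z\<in>UNIV. \<gamma> k z * B k z x) = - \<delta> x" for x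
  proof -
    have "(\<Sum>k\<in>UNIV. \<Sum>z\<in>UNIV. \<gamma> k z * B k z x) = (\<Sum>k\<in>UNIV. \<Sum>z\<in>UNIV. (- (\<Sum>x'\<in>UNIV. \<delta> x' * b x' k z)) * B k z x)"
      by (simp only: g)
    also have "\<dots> = - (\<Sum>x'\<in>UNIV. \<delta> x' * (\<Sum>k\<in>UNIV. \<Sum>z\<in>UNIV. b x' k z * B k z x))"
      by (simp only: sum_idx) (simp add: algebra_simps)
    also have "\<dots> = - \<delta> x" by (simp add: Bb)
    finally show ?thesis .
  qed
  have "(\<kappa> - 1) * \<delta> x = 0" for x using s2[of x] s3[of x] by (simp add: algebra_simps)
  then have dz: "\<delta> x = 0" for x using kappa_n1 by simp
  then have "\<gamma> k z = 0" for k z using g by simp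
  then show ?thesis using dz by (simp add: fun_eq_iff)
qed

lemma alg12:
  assumes E: "\<And>i y z. (\<Sum>m\<in>UNIV. \<gamma> i m * b m y z) + \<delta> z * c i y = 0"
  shows "\<gamma> = (\<lambda>_ _. 0) \<and> \<delta> = (\<lambda>_. 0)"
proof -
  have s1: "\<gamma> i p + \<omega> * (\<Sum>z\<in>UNIV. \<delta> z * a z i p) = 0" for i p
  proof -
    have "0 = (\<Sum>y\<in>UNIV. \<Sum>z\<in>UNIV. ((\<Sum>m\<in>UNIV. \<gamma> i m * b m y z) + \<delta> z * c i y) * B y z p)"
      by (simp add: E)
    also have "\<dots> = (\<Sum>m\<in>UNIV. \<gamma> i m * (\<Sum>y\<in>UNIV. \<Sum>z\<in>UNIV. b m y z * B y z p)) + (\<Sum>z\<in>UNIV. \<delta> z * (\<Sum>y\<in>UNIV. c i y * B y z p))"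
      by (simp only: sum_idx) (simp add: algebra_simps)
    also have "\<dots> = \<gamma> i p + (\<Sum>z\<in>UNIV. \<delta> z * (\<omega> * a z i p))"
      by (simp add: Bb I3)
    also have "\<dots> = \<gamma> i p + \<omega> * (\<Sum>z\<in>UNIV. \<delta> z * a z i p)"
      by (simp add: sum_distrib_left mult_ac)
    finally show ?thesis by simp
  qed
  have s2: "(\<Sum>i\<in>UNIV. \<Sum>y\<in>UNIV. \<Sum>m\<in>UNIV. \<gamma> i m * b m y z * D i y) + \<kappa> * \<delta> z = 0" for z
  proof -
    have "0 = (\<Sum>i\<in>UNIV. \<Sum>y\<in>UNIV. ((\<Sum>m\<in>UNIV. \<gamma> i m * b m y z) + \<delta> z * c i y) * D i y)"
      by (simp add: E)
    also have "\<dots> = (\<Sum>i\<in>UNIV. \<Sum>y\<in>UNIV. \<Sum>m\<in>UNIV. \<gamma> i m * b m y z * D i y) + \<delta> z * (\<Sum>i\<in>UNIV. \<Sum>y\<in>UNIV. c i y * D i y)"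
      by (simp only: sum_idx) (simp add: algebra_simps)
    also have "\<dots> = (\<Sum>i\<in>UNIV. \<Sum>y\<in>UNIV. \<Sum>m\<in>UNIV. \<gamma> i m * b m y z * D i y) + \<kappa> * \<delta> z"
      by (simp add: ax(13))
    finally show ?thesis by simp
  qed
  have g: "\<gamma> i m = - (\<omega> * (\<Sum>z\<in>UNIV. \<delta> z * a z i m))" for i m
    using s1[of i m] by (simp add: eq_neg_iff_add_eq_0)
  have s3: "(\<Sum>i\<in>UNIV. \<Sum>y\<in>UNIV. \<Sum>m\<in>UNIV. \<gamma> i m * b m y z * D i y) = - \<delta> z" for z
  proof -
    have "(\<Sum>i\<in>UNIV. \<Sum>y\<in>UNIV. \<Sum>m\<in>UNIV. \<gamma> i m * b m y z * D i y)
       = (\<Sum>i\<in>UNIV. \<Sum>y\<in>UNIV. \<Sum>m\<in>UNIV. (- (\<omega> * (\<Sum>z'\<in>UNIV. \<delta> z' * a z' i m))) * b m y z * D i y)"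
      by (simp only: g)
    also have "\<dots> = - \<omega> * (\<Sum>z'\<in>UNIV. \<delta> z' * (\<Sum>i\<in>UNIV. \<Sum>m\<in>UNIV. \<Sum>y\<in>UNIV. a z' i m * b m y z * D i y))"
      by (simp only: sum_idx) (simp add: algebra_simps)
    also have "\<dots> = - \<omega> * (\<Sum>z'\<in>UNIV. (\<delta> z' * \<omega>^2) * kdelta z' z)" by (simp only: I8) (simp only: mult.assoc)
    also have "\<dots> = - (\<omega> * \<omega>^2) * \<delta> z" by (simp only: kdelta_sum1) (simp add: mult_ac)
    also have "\<dots> = - \<delta> z" using omega3 by simp
    finally show ?thesis .
  qed
  have "(\<kappa> - 1) * \<delta> x = 0" for x using s2[of x] s3[of x] by (simp add: algebra_simps)
  then have dz: "\<delta> x = 0" for x using kappa_n1 by simp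
  then have "\<gamma> k z = 0" for k z using g by simp
  then show ?thesis using dz by (simp add: fun_eq_iff)
qed


definition "RV k m j = ncmult (rgen q A a k m) (lett (Vl j))"
definition "VR i k m = ncmult (lett (Vl i)) (rgen q A a k m)"
definition "AW k j = ncmult (agen a k) (lett (Wl j))"
definition "VC i = ncmult (lett (Vl i)) (cgen c)"
definition "WA j k = ncmult (lett (Wl j)) (agen a k)"
definition "CV j = ncmult (cgen c) (lett (Vl j))"

lemmas defs21 = RV_def VR_def AW_def VC_def WA_def CV_def

lemma ev21_split:
  fixes cc :: "((idx \<times> idx \<times> idx) + (idx \<times> idx \<times> idx)) + ((idx \<times> idx) + idx) \<Rightarrow> complex"
  shows "(\<Sum>i\<in>UNIV. ncscale (cc i) (case_sum (case_sum (\<lambda>(k, m, j). RV k m j) (\<lambda>(i, k, m). VR i k m)) (case_sum (\<lambda>(k, j). AW k j) VC) i)) w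
   = (\<Sum>k\<in>UNIV. \<Sum>m\<in>UNIV. \<Sum>j\<in>UNIV. cc (Inl (Inl (k, m, j))) * RV k m j w)
   + (\<Sum>i\<in>UNIV. \<Sum>k\<in>UNIV. \<Sum>m\<in>UNIV. cc (Inl (Inr (i, k, m))) * VR i k m w)
   + (\<Sum>k\<in>UNIV. \<Sum>j\<in>UNIV. cc (Inr (Inl (k, j))) * AW k j w)
   + (\<Sum>i\<in>UNIV. cc (Inr (Inr i)) * VC i w)"
  unfolding fsum_apply sum_UNIV_plus sum_UNIV_pair by (simp add: add.assoc)


lemma supp21: "supp_len (RV k m j) 3" "supp_len (VR i k m) 3" "supp_len (AW k j) 3" "supp_len (VC i) 3"
  "supp_len (WA j k) 3" "supp_len (CV j) 3"
  by (simp_all add: defs21 supp_gens)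

lemma I1t: "(\<Sum>i\<in>UNIV. c x i * (t * G i j y l)) + (\<Sum>i\<in>UNIV. - (t * inverse \<omega> * b j i l * a i x y)) = 0"
proof -
  have "(\<Sum>i\<in>UNIV. c x i * (t * G i j y l)) = t * (\<Sum>i\<in>UNIV. c x i * G i j y l)"
    by (simp add: sum_distrib_left mult_ac)
  also have "\<dots> = t * inverse \<omega> * (\<Sum>k\<in>UNIV. b j k l * a k x y)" by (simp add: I1 mult.assoc)
  finally show ?thesis by (simp add: sum_distrib_left sum_negf mult_ac)
qed

lemma S1: "CV j = (\<Sum>x\<in>UNIV. \<Sum>y\<in>UNIV. ncscale (c x y) (VR x y j)) + (\<Sum>k\<in>UNIV. \<Sum>l\<in>UNIV. ncscale (- (\<tau> * inverse \<omega>) * b j k l) (AW k l))"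
proof (rule eq3I)
  fix l1 l2 l3
  show "CV j [l1, l2, l3] = ((\<Sum>x\<in>UNIV. \<Sum>y\<in>UNIV. ncscale (c x y) (VR x y j)) + (\<Sum>k\<in>UNIV. \<Sum>l\<in>UNIV. ncscale (- (\<tau> * inverse \<omega>) * b j k l) (AW k l))) [l1, l2, l3]"
    unfolding fsum_apply plus_fun_apply
    by (cases l1; cases l2; cases l3) (simp_all add: defs21 ncmult_3 ev2_simps \<tau>_def[symmetric] I1t)
qed (auto intro!: supp_len_plus supp_len_sum supp_len_scale supp_len_uminus supp21)


lemma sum_tau: "(\<Sum>i\<in>UNIV. (f i::complex) * (t * g i)) = t * (\<Sum>i\<in>UNIV. f i * g i)"
  by (simp add: sum_distrib_left mult_ac)

lemma I2t: "(\<Sum>l\<in>UNIV. \<Sum>y\<in>UNIV. - (\<tau> * (\<Sum>x\<in>UNIV. a k x y * G j x i l) * (\<tau> * G l y i' l')))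
  = - (a j i i' * kdelta k l' + B j k i * c i' l')"
proof -
  have "(\<Sum>l\<in>UNIV. \<Sum>y\<in>UNIV. - (\<tau> * (\<Sum>x\<in>UNIV. a k x y * G j x i l) * (\<tau> * G l y i' l')))
     = - (\<tau>^2) * (\<Sum>x\<in>UNIV. \<Sum>y\<in>UNIV. \<Sum>l\<in>UNIV. a k x y * G j x i l * G l y i' l')"
    by (simp only: sum_idx) (simp add: algebra_simps power2_eq_square)
  also have "\<dots> = - (\<rho> * \<tau>^2) * (a j i i' * kdelta k l' + B j k i * c i' l')"
    by (simp add: I2)
  also have "\<dots> = - (a j i i' * kdelta k l' + B j k i * c i' l')"
    using rho_tau by simp
  finally show ?thesis .
qed

lemma S2: "WA j k = (\<Sum>x\<in>UNIV. \<Sum>y\<in>UNIV. ncscale (a k x y) (RV j x y))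
   + (\<Sum>i\<in>UNIV. \<Sum>l\<in>UNIV. \<Sum>y\<in>UNIV. ncscale (- (\<tau> * (\<Sum>x\<in>UNIV. a k x y * G j x i l))) (VR i l y))
   + AW j k + (\<Sum>i\<in>UNIV. ncscale (B j k i) (VC i))"
proof (rule eq3I)
  fix l1 l2 l3
  show "WA j k [l1, l2, l3] = ((\<Sum>x\<in>UNIV. \<Sum>y\<in>UNIV. ncscale (a k x y) (RV j x y))
   + (\<Sum>i\<in>UNIV. \<Sum>l\<in>UNIV. \<Sum>y\<in>UNIV. ncscale (- (\<tau> * (\<Sum>x\<in>UNIV. a k x y * G j x i l))) (VR i l y))
   + AW j k + (\<Sum>i\<in>UNIV. ncscale (B j k i) (VC i))) [l1, l2, l3]"
    unfolding fsum_apply plus_fun_apply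
    by (cases l1; cases l2; cases l3) (simp_all add: defs21 ncmult_3 ev2_simps \<tau>_def[symmetric] I2t kdelta_def sum_tau)
qed (auto intro!: supp_len_plus supp_len_sum supp_len_scale supp_len_uminus supp21)


lemma dim21: "cdim (bideg_part (shape_ideal q A a b c) 2 1) = 66"
proof -
  define T where "T = {ncmult (rgen q A a k m) (lett (Vl j)) | k m j. True} \<union> {ncmult (lett (Vl i)) (rgen q A a k m) | i k m. True}
   \<union> {ncmult (agen a k) (lett (Wl j)) | k j. True} \<union> {ncmult (lett (Vl i)) (cgen c) | i. True}
   \<union> {ncmult (lett (Wl j)) (agen a k) | j k. True} \<union> {ncmult (cgen c) (lett (Vl j)) | j. True}"
  have "cdim (bideg_part (shape_ideal q A a b c) 2 1) = nc.dim T"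
  proof (rule cdim_Gs)
    fix v assume "v \<in> prods (Gs q A a b c)"
    then show "\<exists>k' l'. bihom v k' l' \<and> ((k', l') = (2, 1) \<longrightarrow> v \<in> T)"
      unfolding T_def by (rule cls21)
  next
    fix v assume "v \<in> T"
    then show "v \<in> prods (Gs q A a b c) \<and> bihom v 2 1"
      unfolding T_def by (elim UnE CollectE exE conjE; simp only:; intro conjI prods_in Gs_in bh_prods)
  qed simp
  also have "nc.dim T = 66"
  proof -
    define F where "F = (case_sum (case_sum (\<lambda>(k, m, j). RV k m j) (\<lambda>(i, k, m). VR i k m)) (case_sum (\<lambda>(k, j). AW k j) VC)
       :: (((idx \<times> idx \<times> idx) + (idx \<times> idx \<times> idx)) + ((idx \<times> idx) + idx)) \<Rightarrow> ncpoly)"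
    have indep: "\<forall>i\<in>UNIV. cc i = 0" if cz: "(\<Sum>i\<in>UNIV. ncscale (cc i) (F i)) = 0" for cc
    proof -
      have ha: "cc (Inl (Inl (k, m, j))) = 0" for k m j
      proof -
        have "(\<Sum>i\<in>UNIV. ncscale (cc i) (F i)) [Wl k, Vl m, Vl j] = cc (Inl (Inl (k, m, j)))"
          unfolding F_def ev21_split by (simp add: defs21 ncmult_3 ev2_simps)
        then show ?thesis using cz by simp
      qed
      have hb: "cc (Inl (Inr (i, k, m))) = 0" for i k m
      proof -
        have "(\<Sum>i\<in>UNIV. ncscale (cc i) (F i)) [Vl i, Wl k, Vl m] = cc (Inl (Inr (i, k, m)))"
          unfolding F_def ev21_split by (simp add: defs21 ncmult_3 ev2_simps ha)
        then show ?thesis using cz by simp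
      qed
      have E: "(\<Sum>k\<in>UNIV. cc (Inr (Inl (k, z))) * a k x y) + cc (Inr (Inr x)) * c y z = 0" for x y z
      proof -
        have "(\<Sum>i\<in>UNIV. ncscale (cc i) (F i)) [Vl x, Vl y, Wl z] = (\<Sum>k\<in>UNIV. cc (Inr (Inl (k, z))) * a k x y) + cc (Inr (Inr x)) * c y z"
          unfolding F_def ev21_split by (simp add: defs21 ncmult_3 ev2_simps hb)
        then show ?thesis using cz by simp
      qed
      have "(\<lambda>k z. cc (Inr (Inl (k, z)))) = (\<lambda>_ _. 0) \<and> (\<lambda>x. cc (Inr (Inr x))) = (\<lambda>_. 0)"
        by (rule alg21) (rule E)
      then have "cc (Inr (Inl (k, z))) = 0" "cc (Inr (Inr x)) = 0" for k z x by (simp_all add: fun_eq_iff)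
      then show ?thesis using ha hb by (metis obj_sumE prod_cases3 surj_pair UNIV_I)
    qed
    have FT: "F ` UNIV \<subseteq> T"
    proof
      fix v assume "v \<in> F ` UNIV"
      then obtain i where "v = F i" by blast
      have m: "RV k m j \<in> T" "VR i' k m \<in> T" "AW k j \<in> T" "VC i' \<in> T" for k m j i'
        unfolding T_def defs21 by blast+
      show "v \<in> T" using m \<open>v = F i\<close> unfolding F_def
        by (cases i rule: obj_sumE) (auto split: prod.splits sum.splits)
    qed
    have inF: "RV k m j \<in> nc.span (F ` UNIV)" "VR i k m \<in> nc.span (F ` UNIV)" "AW k j \<in> nc.span (F ` UNIV)" "VC i \<in> nc.span (F ` UNIV)"
      for k m j i
    proof -
      have "RV k m j = F (Inl (Inl (k, m, j)))" "VR i k m = F (Inl (Inr (i, k, m)))" "AW k j = F (Inr (Inl (k, j)))" "VC i = F (Inr (Inr i))"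
        by (simp_all add: F_def)
      then show "RV k m j \<in> nc.span (F ` UNIV)" "VR i k m \<in> nc.span (F ` UNIV)" "AW k j \<in> nc.span (F ` UNIV)" "VC i \<in> nc.span (F ` UNIV)"
        by (simp_all add: nc.span_base)
    qed
    have TF: "T \<subseteq> nc.span (F ` UNIV)"
    proof
      fix v assume "v \<in> T"
      then consider k m j where "v = RV k m j" | i k m where "v = VR i k m" | k j where "v = AW k j" | i where "v = VC i"
        | j k where "v = WA j k" | j where "v = CV j"
        unfolding T_def defs21 by blast
      then show "v \<in> nc.span (F ` UNIV)"
      proof cases
        case (5 j k)
        have "WA j k \<in> nc.span (F ` UNIV)" unfolding S2
          by (intro nc.span_add nc.span_sum nc.span_scale inF)
        then show ?thesis using 5 by simp
      next
        case (6 j)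
        have "CV j \<in> nc.span (F ` UNIV)" unfolding S1
          by (intro nc.span_add nc.span_sum nc.span_scale inF)
        then show ?thesis using 6 by simp
      qed (simp_all add: inF)
    qed
    have "nc.span T = nc.span (F ` UNIV)"
      unfolding nc.span_eq using FT TF nc.span_superset by blast
    from fam_dim[OF _ indep this] show ?thesis using card66 by simp
  qed
  finally show ?thesis .
qed


definition "RW k m j = ncmult (rgen q A a k m) (lett (Wl j))"
definition "WR j k m = ncmult (lett (Wl j)) (rgen q A a k m)"
definition "VB i m = ncmult (lett (Vl i)) (bgen b m)"
definition "CW j = ncmult (cgen c) (lett (Wl j))"
definition "BV m j = ncmult (bgen b m) (lett (Vl j))"
definition "WC j = ncmult (lett (Wl j)) (cgen c)"

lemmas defs12 = RW_def WR_def VB_def CW_def BV_def WC_def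

lemma supp12: "supp_len (RW k m j) 3" "supp_len (WR i k m) 3" "supp_len (VB k j) 3" "supp_len (CW i) 3"
  "supp_len (BV j k) 3" "supp_len (WC j) 3"
  by (simp_all add: defs12 supp_gens)

lemma ev12_split:
  fixes cc :: "((idx \<times> idx \<times> idx) + (idx \<times> idx \<times> idx)) + ((idx \<times> idx) + idx) \<Rightarrow> complex"
  shows "(\<Sum>i\<in>UNIV. ncscale (cc i) (case_sum (case_sum (\<lambda>(k, m, j). RW k m j) (\<lambda>(j, k, m). WR j k m)) (case_sum (\<lambda>(i, m). VB i m) CW) i)) w
   = (\<Sum>k\<in>UNIV. \<Sum>m\<in>UNIV. \<Sum>j\<in>UNIV. cc (Inl (Inl (k, m, j))) * RW k m j w)
   + (\<Sum>j\<in>UNIV. \<Sum>k\<in>UNIV. \<Sum>m\<in>UNIV. cc (Inl (Inr (j, k, m))) * WR j k m w)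
   + (\<Sum>i\<in>UNIV. \<Sum>m\<in>UNIV. cc (Inr (Inl (i, m))) * VB i m w)
   + (\<Sum>j\<in>UNIV. cc (Inr (Inr j)) * CW j w)"
  unfolding fsum_apply sum_UNIV_plus sum_UNIV_pair by (simp add: add.assoc)

lemma I4t: "(\<Sum>i\<in>UNIV. c i y * (t * G j i x l)) + (\<Sum>i\<in>UNIV. - (t * a j x i * b i l y)) = 0"
proof -
  have "(\<Sum>i\<in>UNIV. c i y * (t * G j i x l)) = t * (\<Sum>i\<in>UNIV. c i y * G j i x l)"
    by (simp add: sum_distrib_left mult_ac)
  also have "\<dots> = t * (\<Sum>i\<in>UNIV. a j x i * b i l y)" by (simp add: I4)
  finally show ?thesis by (simp add: sum_distrib_left sum_negf mult_ac)
qed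

lemma I5t: "(\<Sum>i\<in>UNIV. \<Sum>ia\<in>UNIV. - (\<tau> * (\<Sum>y\<in>UNIV. b m i y * G y j ia l) * (\<tau> * G i ia x l')))
   = - (inverse \<omega> * (kdelta x m * b j l' l + c x l' * (\<Sum>t\<in>UNIV. D m t * b j t l)))"
proof -
  have "(\<Sum>i\<in>UNIV. \<Sum>ia\<in>UNIV. - (\<tau> * (\<Sum>y\<in>UNIV. b m i y * G y j ia l) * (\<tau> * G i ia x l')))
     = - (\<tau>^2) * (\<Sum>x'\<in>UNIV. \<Sum>i\<in>UNIV. \<Sum>y\<in>UNIV. b m x' y * G y j i l * G x' i x l')"
    by (simp only: sum_idx) (simp add: algebra_simps power2_eq_square)
  also have "\<dots> = - (\<rho> * \<tau>^2) * (inverse \<omega> * (kdelta x m * b j l' l + c x l' * (\<Sum>t\<in>UNIV. D m t * b j t l)))"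
    by (simp add: I5)
  also have "\<dots> = - (inverse \<omega> * (kdelta x m * b j l' l + c x l' * (\<Sum>t\<in>UNIV. D m t * b j t l)))"
    using rho_tau by simp
  finally show ?thesis .
qed

lemma S3: "WC j = (\<Sum>x\<in>UNIV. \<Sum>y\<in>UNIV. ncscale (c x y) (RW j x y)) + (\<Sum>i\<in>UNIV. \<Sum>t\<in>UNIV. ncscale (- (\<tau> * a j i t)) (VB i t))"
proof (rule eq3I)
  fix l1 l2 l3
  show "WC j [l1, l2, l3] = ((\<Sum>x\<in>UNIV. \<Sum>y\<in>UNIV. ncscale (c x y) (RW j x y)) + (\<Sum>i\<in>UNIV. \<Sum>t\<in>UNIV. ncscale (- (\<tau> * a j i t)) (VB i t))) [l1, l2, l3]"
    unfolding fsum_apply plus_fun_apply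
    by (cases l1; cases l2; cases l3) (simp_all add: defs12 ncmult_3 ev2_simps \<tau>_def[symmetric] I4t)
qed (auto intro!: supp_len_plus supp_len_sum supp_len_scale supp_len_uminus supp12)

lemma S4: "BV m j = (\<Sum>x\<in>UNIV. \<Sum>y\<in>UNIV. ncscale (b m x y) (WR x y j))
   + (\<Sum>x\<in>UNIV. \<Sum>i\<in>UNIV. \<Sum>l\<in>UNIV. ncscale (- (\<tau> * (\<Sum>y\<in>UNIV. b m x y * G y j i l))) (RW x i l))
   + ncscale (inverse \<omega>) (VB m j) + (\<Sum>l\<in>UNIV. ncscale (inverse \<omega> * (\<Sum>t\<in>UNIV. D m t * b j t l)) (CW l))"
proof (rule eq3I)
  fix l1 l2 l3
  show "BV m j [l1, l2, l3] = ((\<Sum>x\<in>UNIV. \<Sum>y\<in>UNIV. ncscale (b m x y) (WR x y j))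
   + (\<Sum>x\<in>UNIV. \<Sum>i\<in>UNIV. \<Sum>l\<in>UNIV. ncscale (- (\<tau> * (\<Sum>y\<in>UNIV. b m x y * G y j i l))) (RW x i l))
   + ncscale (inverse \<omega>) (VB m j) + (\<Sum>l\<in>UNIV. ncscale (inverse \<omega> * (\<Sum>t\<in>UNIV. D m t * b j t l)) (CW l))) [l1, l2, l3]"
    unfolding fsum_apply plus_fun_apply
    apply (cases l1; cases l2; cases l3)
    apply (simp_all add: defs12 ncmult_3 ev2_simps \<tau>_def[symmetric] sum_tau I5t)
    apply (auto simp: kdelta_def algebra_simps)
    done
qed (auto intro!: supp_len_plus supp_len_sum supp_len_scale supp_len_uminus supp12)


lemma dim12: "cdim (bideg_part (shape_ideal q A a b c) 1 2) = 66"
proof -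
  define T where "T = {ncmult (rgen q A a k m) (lett (Wl j)) | k m j. True} \<union> {ncmult (lett (Wl j)) (rgen q A a k m) | j k m. True}
   \<union> {ncmult (lett (Vl i)) (bgen b m) | i m. True} \<union> {ncmult (cgen c) (lett (Wl j)) | j. True}
   \<union> {ncmult (bgen b m) (lett (Vl j)) | m j. True} \<union> {ncmult (lett (Wl j)) (cgen c) | j. True}"
  have "cdim (bideg_part (shape_ideal q A a b c) 1 2) = nc.dim T"
  proof (rule cdim_Gs)
    fix v assume "v \<in> prods (Gs q A a b c)"
    then show "\<exists>k' l'. bihom v k' l' \<and> ((k', l') = (1, 2) \<longrightarrow> v \<in> T)"
      unfolding T_def by (rule cls12)
  next
    fix v assume "v \<in> T"
    then show "v \<in> prods (Gs q A a b c) \<and> bihom v 1 2"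
      unfolding T_def by (elim UnE CollectE exE conjE; simp only:; intro conjI prods_in Gs_in bh_prods)
  qed simp
  also have "nc.dim T = 66"
  proof -
    define F where "F = (case_sum (case_sum (\<lambda>(k, m, j). RW k m j) (\<lambda>(j, k, m). WR j k m)) (case_sum (\<lambda>(i, m). VB i m) CW)
       :: (((idx \<times> idx \<times> idx) + (idx \<times> idx \<times> idx)) + ((idx \<times> idx) + idx)) \<Rightarrow> ncpoly)"
    have indep: "\<forall>i\<in>UNIV. cc i = 0" if cz: "(\<Sum>i\<in>UNIV. ncscale (cc i) (F i)) = 0" for cc
    proof -
      have hb: "cc (Inl (Inr (j, k, m))) = 0" for j k m
      proof -
        have "(\<Sum>i\<in>UNIV. ncscale (cc i) (F i)) [Wl j, Wl k, Vl m] = cc (Inl (Inr (j, k, m)))"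
          unfolding F_def ev12_split by (simp add: defs12 ncmult_3 ev2_simps)
        then show ?thesis using cz by simp
      qed
      have ha: "cc (Inl (Inl (k, m, j))) = 0" for k m j
      proof -
        have "(\<Sum>i\<in>UNIV. ncscale (cc i) (F i)) [Wl k, Vl m, Wl j] = cc (Inl (Inl (k, m, j)))"
          unfolding F_def ev12_split by (simp add: defs12 ncmult_3 ev2_simps hb)
        then show ?thesis using cz by simp
      qed
      have E: "(\<Sum>m\<in>UNIV. cc (Inr (Inl (i, m))) * b m y z) + cc (Inr (Inr z)) * c i y = 0" for i y z
      proof -
        have "(\<Sum>i\<in>UNIV. ncscale (cc i) (F i)) [Vl i, Wl y, Wl z] = (\<Sum>m\<in>UNIV. cc (Inr (Inl (i, m))) * b m y z) + cc (Inr (Inr z)) * c i y"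
          unfolding F_def ev12_split by (simp add: defs12 ncmult_3 ev2_simps ha)
        then show ?thesis using cz by simp
      qed
      have "(\<lambda>i m. cc (Inr (Inl (i, m)))) = (\<lambda>_ _. 0) \<and> (\<lambda>z. cc (Inr (Inr z))) = (\<lambda>_. 0)"
        by (rule alg12) (rule E)
      then have "cc (Inr (Inl (k, z))) = 0" "cc (Inr (Inr x)) = 0" for k z x by (simp_all add: fun_eq_iff)
      then show ?thesis using ha hb by (metis obj_sumE prod_cases3 surj_pair UNIV_I)
    qed
    have FT: "F ` UNIV \<subseteq> T"
    proof
      fix v assume "v \<in> F ` UNIV"
      then obtain i where "v = F i" by blast
      have m: "RW k m j \<in> T" "WR i' k m \<in> T" "VB k j \<in> T" "CW i' \<in> T" for k m j i'
        unfolding T_def defs12 by blast+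
      show "v \<in> T" using m \<open>v = F i\<close> unfolding F_def
        by (cases i rule: obj_sumE) (auto split: prod.splits sum.splits)
    qed
    have inF: "RW k m j \<in> nc.span (F ` UNIV)" "WR i k m \<in> nc.span (F ` UNIV)" "VB k j \<in> nc.span (F ` UNIV)" "CW i \<in> nc.span (F ` UNIV)"
      for k m j i
    proof -
      have "RW k m j = F (Inl (Inl (k, m, j)))" "WR i k m = F (Inl (Inr (i, k, m)))" "VB k j = F (Inr (Inl (k, j)))" "CW i = F (Inr (Inr i))"
        by (simp_all add: F_def)
      then show "RW k m j \<in> nc.span (F ` UNIV)" "WR i k m \<in> nc.span (F ` UNIV)" "VB k j \<in> nc.span (F ` UNIV)" "CW i \<in> nc.span (F ` UNIV)"
        by (simp_all add: nc.span_base)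
    qed
    have TF: "T \<subseteq> nc.span (F ` UNIV)"
    proof
      fix v assume "v \<in> T"
      then consider k m j where "v = RW k m j" | j k m where "v = WR j k m" | i m where "v = VB i m" | j where "v = CW j"
        | m j where "v = BV m j" | j where "v = WC j"
        unfolding T_def defs12 by blast
      then show "v \<in> nc.span (F ` UNIV)"
      proof cases
        case (5 m j)
        have "BV m j \<in> nc.span (F ` UNIV)" unfolding S4
          by (intro nc.span_add nc.span_sum nc.span_scale inF)
        then show ?thesis using 5 by simp
      next
        case (6 j)
        have "WC j \<in> nc.span (F ` UNIV)" unfolding S3
          by (intro nc.span_add nc.span_sum nc.span_scale inF)
        then show ?thesis using 6 by simp
      qed (simp_all add: inF)
    qed
    have "nc.span T = nc.span (F ` UNIV)"
      unfolding nc.span_eq using FT TF nc.span_superset by blast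
    from fam_dim[OF _ indep this] show ?thesis using card66 by simp
  qed
  finally show ?thesis .
qed

end

theorem lemma5p2:
  fixes q \<omega> :: complex and A a B b :: t3 and C c D d :: t2
  assumes "BQD q \<omega> A a B b C c D d"
  shows "cdim (bideg_part (shape_ideal q A a b c) 3 0) = 17
       \<and> cdim (bideg_part (shape_ideal q A a b c) 0 3) = 17
       \<and> cdim (bideg_part (shape_ideal q A a b c) 2 1) = 66
       \<and> cdim (bideg_part (shape_ideal q A a b c) 1 2) = 66"
proof -
  interpret bqd q \<omega> A a B b C c D d by unfold_locales (rule assms)
  show ?thesis using dim30 dim03 dim21 dim12 by simp
qed


end
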